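(* For any integer $a$ and any positive odd integer $n$, $$\det\left[\left\lfloor\frac{aj-(a+1)k}{n}\right\rfloor\right]_{1\leqslant j,k\leqslant n}=-\left(\frac{a(a+1)}{n}\right)$$ and $$\det\left[2^{\lfloor\frac{aj-(a+1)k}{n}\rfloor}-1\right]_{1\leqslant j,k\leqslant n}=-\left(\frac{a(a+1)}{n}\right)2^{(1-3n)/2}.$$
   Context: $\lfloor x\rfloor$ is the largest integer not exceeding $x$. $\left(\frac{\cdot}{n}\right)$ denotes the Jacobi symbol modulo the positive odd integer $n$ (equal to $0$ when the argument is not coprime to $n$, and $\left(\frac{\cdot}{1}\right)=1$). *)

theory Defs
  imports "HOL-Number_Theory.Number_Theory" "Jordan_Normal_Form.Determinant"
begin

definition Jacobi :: "int \<Rightarrow> nat \<Rightarrow> int" where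
  "Jacobi a n = (\<Prod>p\<in>prime_factors n. Legendre a (int p) ^ multiplicity p n)"

end

theory Submission
  imports Defs
begin

lemma sign_conj:
  assumes "p permutes A" "finite A" "inj_on f A"
    "\<And>x. x \<in> A \<Longrightarrow> q (f x) = f (p x)" "\<And>y. y \<notin> f ` A \<Longrightarrow> q y = y"
  shows "sign q = sign p"
proof -
  have "q = map_permutation A f p"
  proof
    fix y show "q y = map_permutation A f p y"
    proof (cases "y \<in> f ` A")
      case True then obtain x where x: "x \<in> A" "y = f x" by auto
      then show ?thesis using assms by (simp add: map_permutation_def restrict_id_def)
    next
      case False thus ?thesis using assms by (simp add: map_permutation_def)
    qed
  qed
  thus ?thesis using sign_map_permutation assms by simp
qed

lemma permutes_lessThan:
  fixes f :: "nat \<Rightarrow> nat"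
  assumes "\<And>x. x < N \<Longrightarrow> f x < N" "inj_on f {..<N}" "\<And>x. x \<ge> N \<Longrightarrow> f x = x"
  shows "f permutes {..<N}"
proof (rule bij_imp_permutes)
  have "f ` {..<N} = {..<N}" using assms by (intro endo_inj_surj) auto
  thus "bij_betw f {..<N} {..<N}" using assms(2) by (simp add: bij_betw_def)
  show "x \<notin> {..<N} \<Longrightarrow> f x = x" for x using assms(3) by auto
qed

definition trp :: "nat \<Rightarrow> nat \<Rightarrow> nat \<Rightarrow> nat" where
  "trp N d x = (if x < N then (x + d) mod N else x)"

definition mulp :: "nat \<Rightarrow> nat \<Rightarrow> nat \<Rightarrow> nat" where
  "mulp N c x = (if x < N then (c * x) mod N else x)"

lemma trp_permutes: "trp N d permutes {..<N}"
proof (rule permutes_lessThan)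
  show "inj_on (trp N d) {..<N}"
  proof (rule inj_onI)
    fix x y assume xy: "x \<in> {..<N}" "y \<in> {..<N}" "trp N d x = trp N d y"
    hence "[x + d = y + d] (mod N)" by (auto simp: trp_def cong_def)
    hence "[x = y] (mod N)" by (simp add: cong_add_rcancel_nat)
    thus "x = y" using xy by (auto simp: cong_def)
  qed
qed (auto simp: trp_def)

lemma mulp_permutes: assumes "coprime c N" shows "mulp N c permutes {..<N}"
proof (rule permutes_lessThan)
  show "inj_on (mulp N c) {..<N}"
  proof (rule inj_onI)
    fix x y assume xy: "x \<in> {..<N}" "y \<in> {..<N}" "mulp N c x = mulp N c y"
    hence "[c * x = c * y] (mod N)" by (auto simp: mulp_def cong_def)
    hence "[x = y] (mod N)" using assms by (simp add: cong_mult_lcancel_nat)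
    thus "x = y" using xy by (auto simp: cong_def)
  qed
qed (auto simp: mulp_def)

lemma permutation_trp: "permutation (trp N d)"
  using trp_permutes permutes_imp_permutation by blast

lemma sign_funpow: assumes "permutation f" shows "sign (f ^^ d) = sign f ^ d"
proof (induction d)
  case (Suc d)
  have pd: "permutation (f ^^ d)"
  proof (induction d)
    case (Suc d)
    have "permutation (f \<circ> f ^^ d)" by (rule permutation_compose[OF assms Suc])
    thus ?case by (simp only: funpow.simps(2))
  qed simp
  have "sign (f ^^ Suc d) = sign (f \<circ> f ^^ d)" by (simp only: funpow.simps(2))
  also have "\<dots> = sign f * sign (f ^^ d)" by (rule sign_compose[OF assms pd])
  finally show ?case using Suc by (simp only:) simp
qed simp

lemma trp_funpow: "trp N d = trp N 1 ^^ d"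
proof (induction d)
  case 0
  show ?case by (auto simp: trp_def fun_eq_iff)
next
  case (Suc d)
  have "trp N (Suc d) = trp N 1 \<circ> trp N d"
    by (auto simp: trp_def fun_eq_iff mod_Suc_eq)
  thus ?case using Suc by simp
qed

lemma sign_trp1: "N > 0 \<Longrightarrow> sign (trp N 1) = (-1) ^ (N - 1)"
proof (induction N)
  case 0 thus ?case by simp
next
  case (Suc N)
  show ?case
  proof (cases "N = 0")
    case True
    have "trp (Suc 0) 1 = id" by (auto simp: trp_def fun_eq_iff)
    thus ?thesis using True by simp
  next
    case False
    have eq: "trp (Suc N) 1 = trp N 1 \<circ> Transposition.transpose (N - 1) N"
    proof
      fix x show "trp (Suc N) 1 x = (trp N 1 \<circ> Transposition.transpose (N - 1) N) x"
        using False by (cases "x < N - 1"; cases "x = N - 1"; cases "x = N")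
          (auto simp: trp_def Transposition.transpose_def)
    qed
    have "sign (trp (Suc N) 1) = sign (trp N 1) * sign (Transposition.transpose (N - 1) N)"
      unfolding eq by (rule sign_compose[OF permutation_trp permutation_swap_id])
    also have "\<dots> = (-1) ^ (N - 1) * (-1)" using Suc False by (simp add: sign_swap_id)
    also have "\<dots> = (-1) ^ (Suc N - 1)" using False by (cases N) auto
    finally show ?thesis .
  qed
qed

lemma sign_trp: assumes "N > 0" shows "sign (trp N d) = (-1) ^ ((N - 1) * d)"
proof -
  have "sign (trp N d) = sign (trp N 1) ^ d"
    by (subst trp_funpow) (rule sign_funpow[OF permutation_trp])
  also have "\<dots> = (-1) ^ ((N - 1) * d)" using sign_trp1[OF assms] by (simp add: power_mult)
  finally show ?thesis .
qed

lemma sign_trp_odd: "odd N \<Longrightarrow> sign (trp N d) = 1"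
proof -
  assume "odd N"
  hence "N > 0" "even (N - 1)" by (auto intro: odd_pos)
  thus ?thesis by (simp add: sign_trp)
qed

lemma pm1_cases: "x = (1::int) \<or> x = -1 \<Longrightarrow> y = 1 \<or> y = -1 \<Longrightarrow> [x = y] (mod int p) \<Longrightarrow> p > 2 \<Longrightarrow> x = y"
proof (rule ccontr)
  assume a: "x = (1::int) \<or> x = -1" "y = 1 \<or> y = -1" "[x = y] (mod int p)" "p > 2" "x \<noteq> y"
  hence "int p dvd 2" using a by (auto simp: cong_iff_dvd_diff)
  hence "int p \<le> 2" by (rule zdvd_imp_le) auto
  thus False using a by auto
qed

lemma sign_mulp_prime:
  assumes p: "prime p" "odd p" and c: "coprime c p"
  shows "sign (mulp p c) = Legendre (int c) (int p)"
proof -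
  have p1: "p > 1" using p prime_gt_1_nat by blast
  have p2: "p > 2" using p p1 by (cases "p = 2") auto
  obtain g where gall: "\<forall>k>0. residue_primroot (p ^ k) g"
    using residue_primroot_odd_prime_power_exists[OF p] by blast
  have g: "residue_primroot p g" using spec[OF gall, of 1] by simp
  have tot: "totient p = p - 1" by (rule totient_prime[OF p(1)])
  have bij: "bij_betw (\<lambda>i. g ^ i mod p) {..<p - 1} {0<..<p}"
    using residue_primroot_is_generator[OF p1 g] by (simp add: tot totatives_prime[OF p(1)])
  have cp0: "c mod p \<noteq> 0"
  proof
    assume "c mod p = 0"
    hence "p dvd c" by auto
    hence "p dvd gcd c p" by simp
    thus False using c p1 by simp
  qed
  hence "c mod p \<in> {0<..<p}" using p1 by auto
  moreover have "(\<lambda>i. g ^ i mod p) ` {..<p - 1} = {0<..<p}" using bij by (simp add: bij_betw_def)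
  ultimately have "c mod p \<in> (\<lambda>i. g ^ i mod p) ` {..<p - 1}" by simp
  then obtain k where k0: "k \<in> {..<p - 1}" "c mod p = g ^ k mod p" by (rule imageE)
  hence k: "k < p - 1" "g ^ k mod p = c mod p" by auto
  have ordg: "ord p g = p - 1" using g tot by (simp add: residue_primroot_def)
  have gp: "[g ^ (p - 1) = 1] (mod p)" using ord_works[of g p] ordg by simp
  have gmod: "[g ^ x = g ^ (x mod (p - 1))] (mod p)" for x
  proof -
    have "g ^ x = g ^ ((p - 1) * (x div (p - 1)) + x mod (p - 1))"
      by (simp only: mult_div_mod_eq)
    also have "\<dots> = (g ^ (p - 1)) ^ (x div (p - 1)) * g ^ (x mod (p - 1))"
      by (simp only: power_add power_mult)
    also have "[\<dots> = 1 ^ (x div (p - 1)) * g ^ (x mod (p - 1))] (mod p)"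
      by (intro cong_mult cong_pow gp cong_refl)
    finally show ?thesis by simp
  qed
  define e where "e i = g ^ i mod p" for i
  have img: "e ` {..<p - 1} = {0<..<p}" using bij by (simp add: bij_betw_def e_def[abs_def])
  have conj: "sign (mulp p c) = sign (trp (p - 1) k)"
  proof (rule sign_conj[where A = "{..<p - 1}" and f = e])
    show "trp (p - 1) k permutes {..<p - 1}" by (rule trp_permutes)
    show "inj_on e {..<p - 1}" using bij by (simp add: bij_betw_def e_def[abs_def])
    show "mulp p c (e x) = e (trp (p - 1) k x)" if x: "x \<in> {..<p - 1}" for x
    proof -
      have ex: "e x < p" using p1 by (simp add: e_def)
      have "mulp p c (e x) = (c * g ^ x) mod p"
        using ex by (simp add: mulp_def e_def mod_mult_right_eq)
      moreover have "e (trp (p - 1) k x) = g ^ ((x + k) mod (p - 1)) mod p"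
        using x by (simp add: trp_def e_def)
      moreover have "[c * g ^ x = g ^ ((x + k) mod (p - 1))] (mod p)"
      proof -
        have "[c * g ^ x = g ^ k * g ^ x] (mod p)"
          using k(2) by (intro cong_mult cong_refl) (simp add: cong_def)
        also have "g ^ k * g ^ x = g ^ (x + k)" by (simp add: power_add)
        also have "[\<dots> = g ^ ((x + k) mod (p - 1))] (mod p)" by (rule gmod)
        finally show ?thesis .
      qed
      ultimately show ?thesis by (simp add: cong_def)
    qed
    show "mulp p c y = y" if "y \<notin> e ` {..<p - 1}" for y
      using that img by (cases "y = 0") (auto simp: mulp_def)
  qed auto
  have o: "odd (p - 2)" using p(2) p2 by presburger
  have sk: "sign (trp (p - 1) k) = (-1) ^ k"
  proof -
    have "sign (trp (p - 1) k) = (-1) ^ ((p - 1 - 1) * k)" using p1 by (intro sign_trp) auto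
    also have "p - 1 - 1 = p - 2" by simp
    also have "(-1::int) ^ ((p - 2) * k) = ((-1) ^ (p - 2)) ^ k" by (simp add: power_mult)
    also have "\<dots> = (-1) ^ k" using o by simp
    finally show ?thesis .
  qed
  have cong_ck: "[int c = int g ^ k] (mod int p)"
  proof -
    have "[g ^ k = c] (mod p)" using k(2) by (simp add: cong_def)
    hence "[int (g ^ k) = int c] (mod int p)" by (simp only: cong_int_iff)
    thus ?thesis by (simp add: cong_sym)
  qed
  have h: "[int g ^ ((p - 1) div 2) = -1] (mod int p)"
  proof -
    define h where "h = int g ^ ((p - 1) div 2)"
    have "h ^ 2 = int g ^ (p - 1)"
    proof -
      have "(p - 1) div 2 * 2 = p - 1" using p(2) by presburger
      hence "int g ^ (p - 1) = (int g ^ ((p - 1) div 2)) ^ 2" by (metis power_mult)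
      thus ?thesis unfolding h_def by simp
    qed
    moreover have "[int (g ^ (p - 1)) = int 1] (mod int p)" using gp by (simp only: cong_int_iff)
    ultimately have "[h ^ 2 = 1] (mod int p)" by simp
    hence "int p dvd h ^ 2 - 1" by (simp add: cong_iff_dvd_diff)
    moreover have "h ^ 2 - 1 = (h - 1) * (h + 1)" by (simp add: algebra_simps power2_eq_square)
    ultimately have "int p dvd (h - 1) * (h + 1)" by simp
    moreover have "prime (int p)" using p by simp
    ultimately have "int p dvd h - 1 \<or> int p dvd h + 1" by (simp add: prime_dvd_mult_iff)
    moreover have "\<not> int p dvd h - 1"
    proof
      assume "int p dvd h - 1"
      hence "[int (g ^ ((p - 1) div 2)) = int 1] (mod int p)" by (simp add: cong_iff_dvd_diff h_def)
      hence "[g ^ ((p - 1) div 2) = 1] (mod p)" by (simp only: cong_int_iff)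
      hence "ord p g dvd (p - 1) div 2" by (simp only: ord_divides)
      hence "(p - 1) dvd (p - 1) div 2" using ordg by simp
      hence "p - 1 \<le> (p - 1) div 2" using p2 by (intro dvd_imp_le) auto
      moreover have "(p - 1) div 2 < p - 1" using p2 by auto
      ultimately show False by linarith
    qed
    ultimately have "int p dvd h - (-1)" by simp
    thus ?thesis by (simp add: cong_iff_dvd_diff h_def)
  qed
  have "[Legendre (int c) (int p) = int c ^ ((p - 1) div 2)] (mod int p)"
    by (rule euler_criterion[OF p(1) p2])
  also have "[int c ^ ((p - 1) div 2) = (int g ^ k) ^ ((p - 1) div 2)] (mod int p)"
    by (intro cong_pow cong_ck)
  also have "(int g ^ k) ^ ((p - 1) div 2) = (int g ^ ((p - 1) div 2)) ^ k"
    by (simp add: power_mult[symmetric] mult.commute)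
  also have "[\<dots> = (-1) ^ k] (mod int p)" by (intro cong_pow h)
  finally have L: "[Legendre (int c) (int p) = (-1) ^ k] (mod int p)" .
  have nz: "\<not> [int c = 0] (mod int p)"
  proof
    assume "[int c = 0] (mod int p)"
    hence "[int c = int 0] (mod int p)" by simp
    hence "[c = 0] (mod p)" by (simp only: cong_int_iff)
    thus False using cp0 by (simp add: cong_def)
  qed
  have "Legendre (int c) (int p) = 1 \<or> Legendre (int c) (int p) = -1"
    using nz by (simp add: Legendre_def)
  moreover have "(-1::int) ^ k = 1 \<or> (-1::int) ^ k = -1" by (cases "even k") auto
  ultimately have "Legendre (int c) (int p) = (-1) ^ k" using L p2 by (intro pm1_cases)
  thus ?thesis using conj sk by simp
qed

lemma permutes_conj:
  assumes "p permutes A" "finite A" "inj_on f A"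
    "\<And>x. x \<in> A \<Longrightarrow> q (f x) = f (p x)" "\<And>y. y \<notin> f ` A \<Longrightarrow> q y = y"
  shows "permutation q"
proof -
  have "q = map_permutation A f p"
  proof
    fix y show "q y = map_permutation A f p y"
    proof (cases "y \<in> f ` A")
      case True then obtain x where x: "x \<in> A" "y = f x" by auto
      then show ?thesis using assms by (simp add: map_permutation_def restrict_id_def)
    next
      case False thus ?thesis using assms by (simp add: map_permutation_def)
    qed
  qed
  moreover have "map_permutation A f p permutes f ` A"
    using assms by (intro map_permutation_permutes) (auto simp: bij_betw_def)
  ultimately show ?thesis using assms(2) by (metis finite_imageI permutes_imp_permutation)
qed

lemma sign_mulp_fiber:
  assumes m: "m > 0" and q: "q > 0" "odd q" and c: "coprime c (m * q)"
  shows "sign (mulp (m * q) c) = sign (mulp m c) ^ q * sign (mulp q c) ^ m"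
proof -
  define N where "N = m * q"
  have cm: "coprime c m" and cq: "coprime c q" using c by auto
  define s1 where "s1 x = (if x < N then x mod m + m * ((c * (x div m) + c * (x mod m) div m) mod q) else x)" for x
  define s2 where "s2 x = (if x < N then (c * (x mod m)) mod m + m * (x div m) else x)" for x
  have small: "i + m * r < N" if "i < m" "r < q" for i r
  proof -
    have "i + m * r < m + m * r" using that by simp
    also have "m + m * r = m * (r + 1)" by simp
    also have "\<dots> \<le> m * q" using that by (intro mult_le_mono2) auto
    finally show ?thesis by (simp add: N_def)
  qed
  have divq: "x div m < q" if "x < N" for x
    using that m by (simp add: N_def less_mult_imp_div_less mult.commute)
  have comp: "mulp N c = s2 \<circ> s1"
  proof
    fix x show "mulp N c x = (s2 \<circ> s1) x"
    proof (cases "x < N")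
      case True
      define i where "i = x mod m"
      define r where "r = x div m"
      have i: "i < m" using m by (simp add: i_def)
      have r: "r < q" using divq[OF True] by (simp add: r_def)
      have x: "x = i + m * r" by (simp add: i_def r_def)
      define \<rho> where "\<rho> = (c * r + c * i div m) mod q"
      have rho: "\<rho> < q" using q by (simp add: \<rho>_def)
      have s1x: "s1 x = i + m * \<rho>" using True by (simp add: s1_def i_def r_def \<rho>_def)
      have "s2 (s1 x) = (c * i) mod m + m * \<rho>"
        using small[OF i rho] i m by (simp add: s1x s2_def)
      moreover have "mulp N c x = (c * i) mod m + m * \<rho>"
      proof -
        have "mulp N c x = (c * x) mod (m * q)" using True by (simp add: mulp_def N_def)
        also have "\<dots> = m * ((c * x) div m mod q) + (c * x) mod m" by (rule mod_mult2_eq)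
        also have "c * x = c * i + m * (c * r)" by (simp add: x algebra_simps)
        also have "(c * i + m * (c * r)) div m = c * r + c * i div m" using m by simp
        also have "(c * i + m * (c * r)) mod m = (c * i) mod m" by simp
        finally show ?thesis by (simp add: \<rho>_def)
      qed
      ultimately show ?thesis by simp
    next
      case False thus ?thesis by (simp add: mulp_def s1_def s2_def)
    qed
  qed
  define S2 where "S2 k x = (if x < m * k then s2 x else x)" for k x
  have S2: "permutation (S2 k) \<and> sign (S2 k) = sign (mulp m c) ^ k" if "k \<le> q" for k
    using that
  proof (induction k)
    case 0
    have "S2 0 = id" by (auto simp: S2_def fun_eq_iff)
    thus ?case by simp
  next
    case (Suc k)
    hence IH: "permutation (S2 k)" "sign (S2 k) = sign (mulp m c) ^ k" by auto
    define L where "L y = (if m * k \<le> y \<and> y < m * k + m then m * k + mulp m c (y - m * k) else y)" for y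
    have Lc1: "L (m * k + x) = m * k + mulp m c x" if "x \<in> {..<m}" for x
      using that by (simp add: L_def)
    have Lc2: "L y = y" if "y \<notin> (\<lambda>x. m * k + x) ` {..<m}" for y
    proof -
      have "\<not> (m * k \<le> y \<and> y < m * k + m)"
      proof
        assume "m * k \<le> y \<and> y < m * k + m"
        hence "y = m * k + (y - m * k)" "y - m * k \<in> {..<m}" by auto
        thus False using that by blast
      qed
      thus ?thesis unfolding L_def by auto
    qed
    have pL: "permutation L"
      by (rule permutes_conj[OF mulp_permutes[OF cm], of "\<lambda>x. m * k + x"]) (use Lc1 Lc2 in auto)
    have sL: "sign L = sign (mulp m c)"
      by (rule sign_conj[OF mulp_permutes[OF cm], of "\<lambda>x. m * k + x"]) (use Lc1 Lc2 in auto)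
    have eq: "S2 (Suc k) = L \<circ> S2 k"
    proof
      fix x
      have kq: "m * Suc k \<le> N" unfolding N_def by (rule mult_le_mono2[OF Suc.prems])
      have kk: "m * k \<le> m * Suc k" by (rule mult_le_mono2) simp
      show "S2 (Suc k) x = (L \<circ> S2 k) x"
      proof (cases "x < m * k")
        case True
        hence xN: "x < N" using kq kk by linarith
        have "x div m < k" using True m by (simp add: less_mult_imp_div_less mult.commute)
        hence "x div m + 1 \<le> k" by simp
        hence "m * (x div m + 1) \<le> m * k" by (rule mult_le_mono2)
        moreover have "(c * (x mod m)) mod m < m" using m by simp
        ultimately have "s2 x < m * k" using xN by (simp add: s2_def algebra_simps)
        thus ?thesis using True kk by (simp add: S2_def L_def)
      next
        case False
        show ?thesis
        proof (cases "x < m * Suc k")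
          case True
          hence xN: "x < N" using kq by simp
          have dk: "x div m = k" using True False by (intro div_nat_eqI) auto
          have mk: "x mod m = x - m * k"
            using dk div_mult_mod_eq[of x m] by (metis add_diff_cancel_left' mult.commute)
          have "x - m * k < m" using True False by (simp add: less_diff_conv2 not_less)
          thus ?thesis using True False xN dk mk
            by (simp add: S2_def L_def s2_def mulp_def)
        next
          case False2: False
          thus ?thesis using False by (simp add: S2_def L_def)
        qed
      qed
    qed
    have "permutation (S2 (Suc k))" unfolding eq by (rule permutation_compose[OF pL IH(1)])
    moreover have "sign (S2 (Suc k)) = sign (mulp m c) ^ Suc k"
      unfolding eq by (simp add: sign_compose[OF pL IH(1)] sL IH(2))
    ultimately show ?case by simp
  qed
  have s2eq: "s2 = S2 q" by (auto simp: fun_eq_iff S2_def s2_def N_def)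
  have ps2: "permutation s2" and ss2: "sign s2 = sign (mulp m c) ^ q"
    using S2[of q] by (auto simp: s2eq)
  define S1 where "S1 k x = (if x < N \<and> x mod m < k then s1 x else x)" for k x
  have S1: "permutation (S1 k) \<and> sign (S1 k) = sign (mulp q c) ^ k" if "k \<le> m" for k
    using that
  proof (induction k)
    case 0
    have "S1 0 = id" by (auto simp: S1_def fun_eq_iff)
    thus ?case by simp
  next
    case (Suc k)
    hence IH: "permutation (S1 k)" "sign (S1 k) = sign (mulp q c) ^ k" by auto
    have km: "k < m" using Suc.prems by simp
    define d where "d = c * k div m"
    define \<rho> where "\<rho> = trp q d \<circ> mulp q c"
    have prho: "\<rho> permutes {..<q}" unfolding \<rho>_def
      by (rule permutes_compose[OF mulp_permutes[OF cq] trp_permutes])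
    have srho: "sign \<rho> = sign (mulp q c)"
      unfolding \<rho>_def using sign_trp_odd[OF q(2)]
      by (simp add: sign_compose[OF permutation_trp permutes_imp_permutation[OF _ mulp_permutes[OF cq]]])
    have rho: "\<rho> r = (c * r + d) mod q" if "r < q" for r
      using that by (simp add: \<rho>_def trp_def mulp_def mod_add_left_eq)
    define R where "R y = (if y < N \<and> y mod m = k then k + m * ((c * (y div m) + d) mod q) else y)" for y
    have Rc1: "R (k + m * r) = k + m * \<rho> r" if "r \<in> {..<q}" for r
      using that small[OF km, of r] km by (simp add: R_def rho)
    have Rc2: "R y = y" if "y \<notin> (\<lambda>r. k + m * r) ` {..<q}" for y
    proof (cases "y < N \<and> y mod m = k")
      case True
      hence "y = k + m * (y div m)" "y div m \<in> {..<q}" using divq[of y]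
        by (auto simp: mult.commute)
      thus ?thesis using that by blast
    next
      case False thus ?thesis unfolding R_def by auto
    qed
    have injf: "inj_on (\<lambda>r. k + m * r) {..<q}" using m by (auto simp: inj_on_def)
    have pR: "permutation R"
      by (rule permutes_conj[OF prho _ injf]) (use Rc1 Rc2 in auto)
    have sR: "sign R = sign (mulp q c)"
      using sign_conj[OF prho _ injf, of R] Rc1 Rc2 srho by auto
    have eq: "S1 (Suc k) = R \<circ> S1 k"
    proof
      fix x
      show "S1 (Suc k) x = (R \<circ> S1 k) x"
      proof (cases "x < N")
        case xN: True
        define i where "i = x mod m"
        define r where "r = x div m"
        have i: "i < m" using m by (simp add: i_def)
        have r: "r < q" using divq[OF xN] by (simp add: r_def)
        have s1x: "s1 x = i + m * ((c * r + c * i div m) mod q)"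
          using xN by (simp add: s1_def i_def r_def)
        have s1N: "s1 x < N" using small[OF i, of "(c * r + c * i div m) mod q"] q by (simp add: s1x)
        have s1m: "s1 x mod m = i" using i by (simp add: s1x)
        show ?thesis
        proof (cases "i < k")
          case True
          thus ?thesis using xN s1N s1m by (simp add: S1_def R_def i_def)
        next
          case False
          show ?thesis
          proof (cases "i = k")
            case True
            have "R x = s1 x" using xN True by (simp add: R_def s1x i_def r_def d_def)
            thus ?thesis using True xN by (simp add: S1_def i_def)
          next
            case False2: False
            thus ?thesis using False xN by (simp add: S1_def R_def i_def)
          qed
        qed
      next
        case False thus ?thesis by (simp add: S1_def R_def)
      qed
    qed
    have "permutation (S1 (Suc k))" unfolding eq by (rule permutation_compose[OF pR IH(1)])
    moreover have "sign (S1 (Suc k)) = sign (mulp q c) ^ Suc k"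
      unfolding eq by (simp add: sign_compose[OF pR IH(1)] sR IH(2))
    ultimately show ?case by simp
  qed
  have s1eq: "s1 = S1 m" using m by (auto simp: fun_eq_iff S1_def s1_def)
  have ps1: "permutation s1" and ss1: "sign s1 = sign (mulp q c) ^ m"
    using S1[of m] by (auto simp: s1eq)
  have "sign (mulp N c) = sign s2 * sign s1" unfolding comp by (rule sign_compose[OF ps2 ps1])
  thus ?thesis using ss1 ss2 by (simp add: N_def)
qed

lemma Jacobi_mult_prime:
  assumes p: "prime p" and m: "m > 0"
  shows "Jacobi a (p * m) = Legendre a (int p) * Jacobi a m"
proof -
  define L where "L q = Legendre a (int q)" for q
  have p0: "p \<noteq> 0" using p by auto
  have PF: "prime_factors (p * m) = insert p (prime_factors m)"
    using p0 m by (simp add: prime_factors_product prime_prime_factors[OF p])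
  have mult: "multiplicity q (p * m) = multiplicity q m + (if q = p then 1 else 0)"
    if "q \<in> insert p (prime_factors m)" for q
  proof -
    have q: "prime q" using that p by auto
    have "multiplicity q (p * m) = multiplicity q p + multiplicity q m"
      using q p0 m by (intro prime_elem_multiplicity_mult_distrib) auto
    moreover have "multiplicity q p = (if q = p then 1 else 0)"
      using q p by (auto simp: prime_multiplicity_other)
    ultimately show ?thesis by simp
  qed
  have "Jacobi a (p * m) = (\<Prod>q\<in>insert p (prime_factors m). L q ^ multiplicity q m * L q ^ (if q = p then 1 else 0))"
    unfolding Jacobi_def PF L_def[symmetric] by (intro prod.cong refl) (simp add: mult power_add)
  also have "\<dots> = (\<Prod>q\<in>insert p (prime_factors m). L q ^ multiplicity q m) * (\<Prod>q\<in>insert p (prime_factors m). L q ^ (if q = p then 1 else 0))"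
    by (rule prod.distrib)
  also have "(\<Prod>q\<in>insert p (prime_factors m). L q ^ (if q = p then 1 else 0)) = L p"
  proof -
    have "(\<Prod>q\<in>insert p (prime_factors m). L q ^ (if q = p then 1 else 0)) = (\<Prod>q\<in>insert p (prime_factors m). if q = p then L q else 1)"
      by (intro prod.cong) auto
    also have "\<dots> = L p" by (subst prod.delta) auto
    finally show ?thesis .
  qed
  also have "(\<Prod>q\<in>insert p (prime_factors m). L q ^ multiplicity q m) = Jacobi a m"
  proof (cases "p \<in> prime_factors m")
    case True thus ?thesis by (simp add: insert_absorb Jacobi_def L_def)
  next
    case False
    hence "multiplicity p m = 0" using p by (auto simp: prime_factors_multiplicity)
    thus ?thesis using False by (simp add: Jacobi_def L_def)
  qed
  finally show ?thesis by (simp add: L_def)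
qed

lemma sign_odd_pow: "odd k \<Longrightarrow> sign f ^ k = sign f"
  by (cases "evenperm f") (auto simp: sign_def)

lemma zolotarev:
  assumes "odd n" "coprime c n"
  shows "sign (mulp n c) = Jacobi (int c) n"
  using assms
proof (induction n rule: less_induct)
  case (less n)
  show ?case
  proof (cases "n = 1")
    case True
    have "mulp 1 c = id" by (auto simp: mulp_def fun_eq_iff)
    thus ?thesis using True by (simp add: Jacobi_def)
  next
    case False
    then obtain p where p: "prime p" "p dvd n" using prime_factor_nat by blast
    then obtain m where nm: "n = p * m" by (auto elim: dvdE)
    have n0: "n > 0" using less.prems by (auto intro: odd_pos)
    have m0: "m > 0" using n0 nm by auto
    have p1: "p > 1" using p prime_gt_1_nat by blast
    have mn: "m < n" using nm p1 m0 by simp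
    have om: "odd m" and op: "odd p" using less.prems nm by auto
    have cm: "coprime c m" and cp: "coprime c p" using less.prems nm by auto
    have "sign (mulp n c) = sign (mulp (m * p) c)" using nm by (simp add: mult.commute)
    also have "\<dots> = sign (mulp m c) ^ p * sign (mulp p c) ^ m"
      using m0 p1 op less.prems nm by (intro sign_mulp_fiber) (auto simp: mult.commute)
    also have "\<dots> = sign (mulp m c) * sign (mulp p c)" using op om by (simp add: sign_odd_pow)
    also have "sign (mulp m c) = Jacobi (int c) m" using less.IH[OF mn om cm] .
    also have "sign (mulp p c) = Legendre (int c) (int p)" using sign_mulp_prime[OF p(1) op cp] .
    also have "Jacobi (int c) m * Legendre (int c) (int p) = Jacobi (int c) n"
      using Jacobi_mult_prime[OF p(1) m0, of "int c"] nm by simp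
    finally show ?thesis .
  qed
qed

lemma prod_mat_perm:
  assumes "p permutes {0..<n}"
  shows "(\<Prod>i = 0..<n. mat n n f $$ (i, p i)) = (\<Prod>i = 0..<n. f (i, p i))"
proof (rule prod.cong[OF refl])
  fix i assume "i \<in> {0..<n}"
  moreover hence "p i \<in> {0..<n}" using permutes_in_image[OF assms] by auto
  ultimately show "mat n n f $$ (i, p i) = f (i, p i)" by simp
qed

lemma det_scale:
  fixes h :: "nat \<Rightarrow> nat \<Rightarrow> 'a :: comm_ring_1"
  shows "det (mat n n (\<lambda>(i,j). r i * h i j * s j)) =
    (\<Prod>i<n. r i) * (\<Prod>j<n. s j) * det (mat n n (\<lambda>(i,j). h i j))"
proof -
  have *: "of_int (sign p) * (\<Prod>i = 0..<n. mat n n (\<lambda>(i,j). r i * h i j * s j) $$ (i, p i)) =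
      (\<Prod>i<n. r i) * (\<Prod>j<n. s j) * (of_int (sign p) * (\<Prod>i = 0..<n. mat n n (\<lambda>(i,j). h i j) $$ (i, p i)))"
    if p: "p \<in> {p. p permutes {0..<n}}" for p
  proof -
    have p: "p permutes {0..<n}" using p by simp
    have "(\<Prod>i = 0..<n. s (p i)) = (\<Prod>j = 0..<n. s j)"
      using prod.permute[OF p, of s] by (simp add: comp_def)
    thus ?thesis unfolding prod_mat_perm[OF p] by (simp add: prod.distrib atLeast0LessThan mult_ac)
  qed
  show ?thesis
    unfolding det_def'[OF mat_carrier] sum_distrib_left by (rule sum.cong[OF refl *])
qed

lemma det_reindex:
  fixes g :: "nat \<Rightarrow> nat \<Rightarrow> 'a :: comm_ring_1"
  assumes s: "\<sigma> permutes {0..<n}" and t: "\<tau> permutes {0..<n}"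
  shows "det (mat n n (\<lambda>(j,k). g (\<sigma> j) (\<tau> k))) = of_int (sign \<sigma> * sign \<tau>) * det (mat n n (\<lambda>(u,v). g u v))"
proof -
  have sl: "\<sigma> j < n" if "j < n" for j using permutes_in_image[OF s] that by auto
  have tl: "\<tau> j < n" if "j < n" for j using permutes_in_image[OF t] that by auto
  define A where "A = mat n n (\<lambda>(u,k). g u (\<tau> k))"
  have "mat n n (\<lambda>(j,k). g (\<sigma> j) (\<tau> k)) = mat n n (\<lambda>(j,k). A $$ (\<sigma> j, k))"
    by (rule eq_matI) (auto simp: A_def sl)
  hence 1: "det (mat n n (\<lambda>(j,k). g (\<sigma> j) (\<tau> k))) = signof \<sigma> * det A"
    using det_permute_rows[OF _ s, of A] by (simp add: A_def)
  define B where "B = mat n n (\<lambda>(v,u). g u v)"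
  have "transpose_mat A = mat n n (\<lambda>(k,u). B $$ (\<tau> k, u))"
    by (rule eq_matI) (auto simp: A_def B_def tl)
  hence "det (transpose_mat A) = signof \<tau> * det B"
    using det_permute_rows[OF _ t, of B] by (simp add: B_def)
  moreover have "det (transpose_mat A) = det A" by (rule det_transpose[of A n]) (simp add: A_def)
  ultimately have 2: "det A = signof \<tau> * det B" by simp
  have "transpose_mat B = mat n n (\<lambda>(u,v). g u v)" by (rule eq_matI) (auto simp: B_def)
  hence 3: "det B = det (mat n n (\<lambda>(u,v). g u v))"
    using det_transpose[of B n] by (simp add: B_def)
  show ?thesis using 1 2 3 by simp
qed

lemma det_col0:
  fixes A :: "'a :: comm_ring_1 mat"
  assumes A: "A \<in> carrier_mat (Suc n) (Suc n)" and z: "\<And>i. 0 < i \<Longrightarrow> i < Suc n \<Longrightarrow> A $$ (i, 0) = 0"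
  shows "det A = A $$ (0, 0) * det (mat n n (\<lambda>(i,j). A $$ (Suc i, Suc j)))"
proof -
  have "det A = (\<Sum>i<Suc n. A $$ (i,0) * cofactor A i 0)" by (rule laplace_expansion_column[OF A]) simp
  also have "\<dots> = A $$ (0,0) * cofactor A 0 0"
    by (subst sum.remove[of _ 0]) (use z in auto)
  also have "mat_delete A 0 0 = mat n n (\<lambda>(i,j). A $$ (Suc i, Suc j))"
    using A by (intro eq_matI) (auto simp: mat_delete_def)
  hence "cofactor A 0 0 = det (mat n n (\<lambda>(i,j). A $$ (Suc i, Suc j)))" by (simp add: cofactor_def)
  finally show ?thesis .
qed

lemma det_unit_lower:
  fixes f :: "nat \<Rightarrow> 'a :: comm_ring_1"
  shows "det (mat (Suc n) (Suc n) (\<lambda>(i,j). if i = j then 1 else if j = 0 then f i else 0)) = 1"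
proof -
  have "det (mat (Suc n) (Suc n) (\<lambda>(i,j). if i = j then 1 else if j = 0 then f i else 0)) =
    prod_list (diag_mat (mat (Suc n) (Suc n) (\<lambda>(i,j). if i = j then (1::'a) else if j = 0 then f i else 0)))"
    by (rule det_lower_triangular[of "Suc n"]) auto
  also have "\<dots> = 1" by (simp add: prod_list_diag_prod)
  finally show ?thesis .
qed

lemma det_rank_one:
  fixes k :: "nat \<Rightarrow> nat \<Rightarrow> 'a :: comm_ring_1"
  assumes KY: "\<And>u. u < n \<Longrightarrow> (\<Sum>v<n. k u v * Y v) = P u"
  shows "det (mat n n (\<lambda>(u,v). k u v - P u * Q v)) = det (mat n n (\<lambda>(u,v). k u v)) * (1 - (\<Sum>v<n. Q v * Y v))"
proof -
  define B where "B = mat (Suc n) (Suc n) (\<lambda>(i,j). if i = 0 then (if j = 0 then 1 else Q (j - 1))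
      else (if j = 0 then P (i - 1) else k (i - 1) (j - 1)))"
  define L where "L = mat (Suc n) (Suc n) (\<lambda>(i,j). if i = j then 1 else if j = 0 then - P (i - 1) else (0::'a))"
  define C where "C = mat (Suc n) (Suc n) (\<lambda>(i,j). if i = j then 1 else if j = 0 then - Y (i - 1) else (0::'a))"
  have B: "B \<in> carrier_mat (Suc n) (Suc n)" and L: "L \<in> carrier_mat (Suc n) (Suc n)"
    and C: "C \<in> carrier_mat (Suc n) (Suc n)" by (auto simp: B_def L_def C_def)
  have dL: "det L = 1" unfolding L_def by (rule det_unit_lower)
  have dC: "det C = 1" unfolding C_def by (rule det_unit_lower)
  have sumS: "(\<Sum>w<Suc n. f w) = f 0 + (\<Sum>v<n. f (Suc v))" for f :: "nat \<Rightarrow> 'a"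
    by (rule sum.lessThan_Suc_shift)
  have LB: "(L * B) $$ (i, j) = (if i = 0 then B $$ (0, j) else if j = 0 then 0 else k (i - 1) (j - 1) - P (i - 1) * Q (j - 1))"
    if "i < Suc n" "j < Suc n" for i j
  proof -
    have "(L * B) $$ (i, j) = (\<Sum>w<Suc n. L $$ (i, w) * B $$ (w, j))"
      using that L B by (simp add: scalar_prod_def atLeast0LessThan)
    also have "\<dots> = (if i = 0 then B $$ (0, j) else B $$ (i, j) - P (i - 1) * B $$ (0, j))"
    proof (cases "i = 0")
      case True
      have "(\<Sum>w<Suc n. L $$ (i, w) * B $$ (w, j)) = (\<Sum>w<Suc n. if w = 0 then B $$ (0, j) else 0)"
        using that True by (intro sum.cong) (auto simp: L_def)
      thus ?thesis using True by simp
    next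
      case False
      have "(\<Sum>w<Suc n. L $$ (i, w) * B $$ (w, j)) = (\<Sum>w<Suc n. (if w = i then B $$ (i, j) else 0) + (if w = 0 then - P (i - 1) * B $$ (0, j) else 0))"
        using that False by (intro sum.cong) (auto simp: L_def)
      also have "\<dots> = B $$ (i, j) - P (i - 1) * B $$ (0, j)"
        using that by (simp add: sum.distrib)
      finally show ?thesis using False by simp
    qed
    also have "\<dots> = (if i = 0 then B $$ (0, j) else if j = 0 then 0 else k (i - 1) (j - 1) - P (i - 1) * Q (j - 1))"
      using that by (auto simp: B_def)
    finally show ?thesis .
  qed
  have BC: "(B * C) $$ (i, j) = (if j = 0 then (if i = 0 then 1 - (\<Sum>v<n. Q v * Y v) else 0) else B $$ (i, j))"
    if "i < Suc n" "j < Suc n" for i j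
  proof -
    have "(B * C) $$ (i, j) = (\<Sum>w<Suc n. B $$ (i, w) * C $$ (w, j))"
      using that C B by (simp add: scalar_prod_def atLeast0LessThan)
    also have "\<dots> = (if j = 0 then B $$ (i, 0) - (\<Sum>v<n. B $$ (i, Suc v) * Y v) else B $$ (i, j))"
    proof (cases "j = 0")
      case True
      have "(\<Sum>w<Suc n. B $$ (i, w) * C $$ (w, j)) = B $$ (i,0) * C $$ (0,0) + (\<Sum>v<n. B $$ (i, Suc v) * C $$ (Suc v, 0))"
        using True by (rule ssubst) (rule sumS)
      also have "(\<Sum>v<n. B $$ (i, Suc v) * C $$ (Suc v, 0)) = (\<Sum>v<n. - (B $$ (i, Suc v) * Y v))"
        by (intro sum.cong) (auto simp: C_def)
      also have "C $$ (0,0) = 1" by (simp add: C_def)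
      finally show ?thesis using True by (simp add: sum_negf)
    next
      case False
      have "(\<Sum>w<Suc n. B $$ (i, w) * C $$ (w, j)) = (\<Sum>w<Suc n. (if w = j then B $$ (i, j) else 0))"
        using that False by (intro sum.cong) (auto simp: C_def)
      also have "\<dots> = B $$ (i, j)" using that by simp
      finally show ?thesis using False by simp
    qed
    also have "\<dots> = (if j = 0 then (if i = 0 then 1 - (\<Sum>v<n. Q v * Y v) else 0) else B $$ (i, j))"
      using that KY[of "i - 1"] by (auto simp: B_def)
    finally show ?thesis .
  qed
  have "det (L * B) = det (mat n n (\<lambda>(u,v). k u v - P u * Q v))"
  proof -
    have "det (L * B) = (L * B) $$ (0, 0) * det (mat n n (\<lambda>(i,j). (L * B) $$ (Suc i, Suc j)))"
      by (rule det_col0) (use L B LB in auto)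
    also have "mat n n (\<lambda>(i,j). (L * B) $$ (Suc i, Suc j)) = mat n n (\<lambda>(u,v). k u v - P u * Q v)"
      by (rule eq_matI) (auto simp: LB)
    also have "(L * B) $$ (0, 0) = 1" using LB[of 0 0] by (simp add: B_def)
    finally show ?thesis by simp
  qed
  moreover have "det (B * C) = det (mat n n (\<lambda>(u,v). k u v)) * (1 - (\<Sum>v<n. Q v * Y v))"
  proof -
    have "det (B * C) = (B * C) $$ (0, 0) * det (mat n n (\<lambda>(i,j). (B * C) $$ (Suc i, Suc j)))"
      by (rule det_col0) (use C B BC in auto)
    also have "mat n n (\<lambda>(i,j). (B * C) $$ (Suc i, Suc j)) = mat n n (\<lambda>(u,v). k u v)"
    proof (rule eq_matI)
      fix i j assume "i < dim_row (mat n n (\<lambda>(u,v). k u v))" "j < dim_col (mat n n (\<lambda>(u,v). k u v))"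
      hence ij: "i < n" "j < n" by auto
      have "(B * C) $$ (Suc i, Suc j) = B $$ (Suc i, Suc j)" using BC[of "Suc i" "Suc j"] ij by simp
      also have "\<dots> = k i j" using ij by (simp add: B_def)
      finally show "mat n n (\<lambda>(i,j). (B * C) $$ (Suc i, Suc j)) $$ (i, j) = mat n n (\<lambda>(u,v). k u v) $$ (i, j)"
        using ij by simp
    qed auto
    also have "(B * C) $$ (0, 0) = 1 - (\<Sum>v<n. Q v * Y v)" by (simp add: BC)
    finally show ?thesis by (simp add: mult.commute)
  qed
  moreover have "det (L * B) = det B" using det_mult[OF L B] dL by simp
  moreover have "det (B * C) = det B" using det_mult[OF B C] dC by simp
  ultimately show ?thesis by simp
qed

lemma det_K:
  fixes s :: "'a :: comm_ring_1"
  assumes n: "n > 0"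
  shows "det (mat n n (\<lambda>(u,v). if u < v then s else 1)) = (1 - s) ^ (n - 1)"
proof -
  define Lo where "Lo = mat n n (\<lambda>(u,v). if v \<le> u then 1 else (0::'a))"
  define U where "U = mat n n (\<lambda>(u,v). if u = 0 then (if v = 0 then 1 else s) else if u = v then 1 - s else 0)"
  have Lo: "Lo \<in> carrier_mat n n" and U: "U \<in> carrier_mat n n" by (auto simp: Lo_def U_def)
  have "mat n n (\<lambda>(u,v). if u < v then s else 1) = Lo * U"
  proof (rule eq_matI)
    fix u v assume uv: "u < dim_row (Lo * U)" "v < dim_col (Lo * U)"
    hence u: "u < n" and v: "v < n" using Lo U by auto
    have "(Lo * U) $$ (u, v) = (\<Sum>w<n. Lo $$ (u, w) * U $$ (w, v))"
      using u v Lo U by (simp add: scalar_prod_def atLeast0LessThan)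
    also have "\<dots> = (\<Sum>w<n. (if w = 0 then U $$ (0, v) else 0) + (if w = v \<and> 0 < w \<and> w \<le> u then 1 - s else 0))"
      using u v by (intro sum.cong) (auto simp: Lo_def U_def)
    also have "\<dots> = (\<Sum>w<n. (if w = 0 then U $$ (0, v) else 0)) + (\<Sum>w<n. (if w = v then (if 0 < v \<and> v \<le> u then 1 - s else 0) else 0))"
      by (subst sum.distrib) (intro arg_cong2[where f = "(+)"] sum.cong, auto)
    also have "\<dots> = U $$ (0, v) + (if 0 < v \<and> v \<le> u then 1 - s else 0)"
      using u v n by (simp add: sum.delta)
    also have "\<dots> = (if u < v then s else 1)" using u v n by (auto simp: U_def)
    finally show "mat n n (\<lambda>(u,v). if u < v then s else 1) $$ (u, v) = (Lo * U) $$ (u, v)"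
      using u v by simp
  qed (auto simp: Lo_def U_def)
  hence "det (mat n n (\<lambda>(u,v). if u < v then s else 1)) = det Lo * det U" using det_mult[OF Lo U] by simp
  moreover have "det Lo = 1"
  proof -
    have "det Lo = prod_list (diag_mat Lo)" by (rule det_lower_triangular[of n]) (auto simp: Lo_def)
    thus ?thesis by (simp add: prod_list_diag_prod Lo_def)
  qed
  moreover have "det U = (1 - s) ^ (n - 1)"
  proof -
    have "det U = prod_list (diag_mat U)" by (rule det_upper_triangular) (auto simp: U_def upper_triangular_def)
    also have "\<dots> = (\<Prod>i = 0..<n. U $$ (i, i))" by (simp add: prod_list_diag_prod U_def)
    also have "\<dots> = (\<Prod>i = 0..<n. if i = 0 then 1 else 1 - s)" by (intro prod.cong) (auto simp: U_def)
    also have "\<dots> = (1 - s) ^ (n - 1)"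
    proof -
      have "{0..<n} = insert 0 {1..<n}" using n by auto
      hence "(\<Prod>i = 0..<n. if i = 0 then 1 else 1 - s) = (\<Prod>i = 1..<n. if i = 0 then 1 else 1 - s)" by simp
      also have "\<dots> = (\<Prod>i = 1..<n. 1 - s)" by (intro prod.cong) auto
      finally show ?thesis by simp
    qed
    finally show ?thesis .
  qed
  ultimately show ?thesis by simp
qed

lemma Legendre_cong:
  assumes "[x = y] (mod p)"
  shows "Legendre x p = Legendre y p"
proof -
  have "[x = 0] (mod p) \<longleftrightarrow> [y = 0] (mod p)" using assms cong_sym cong_trans by blast
  moreover have "QuadRes p x \<longleftrightarrow> QuadRes p y"
    unfolding QuadRes_def using assms cong_sym cong_trans by blast
  ultimately show ?thesis by (simp add: Legendre_def)
qed

lemma Jacobi_cong: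
  assumes "[x = y] (mod int n)"
  shows "Jacobi x n = Jacobi y n"
  unfolding Jacobi_def
proof (rule prod.cong[OF refl])
  fix p assume "p \<in> prime_factors n"
  hence "p dvd n" by auto
  hence "int p dvd int n" by simp
  hence "[x = y] (mod int p)" using assms cong_dvd_modulus by blast
  thus "Legendre x (int p) ^ multiplicity p n = Legendre y (int p) ^ multiplicity p n"
    by (simp add: Legendre_cong)
qed

lemma mulp_mult: "mulp n (c * d) = mulp n c \<circ> mulp n d"
  by (auto simp: fun_eq_iff mulp_def mod_mult_right_eq mult.assoc)

lemma sum_Suc_int: "2 * (\<Sum>j<n. int (Suc j)) = int n * (int n + 1)"
  by (induction n) (auto simp: algebra_simps)

locale cop =
  fixes a :: int and n :: nat
  assumes odd_n: "odd n" and cop_a: "coprime a (int n)" and cop_b: "coprime (a + 1) (int n)"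
begin

definition "b = a + 1"
definition "X j k = a * int (Suc j) - b * int (Suc k)"
definition "na = nat (a mod int n)"
definition "nb = nat (b mod int n)"
definition "\<sigma> = mulp n na \<circ> trp n 1"
definition "\<tau> = mulp n nb \<circ> trp n 1"
definition "\<alpha> j = (a * int (Suc j)) div int n"
definition "\<beta> k = (b * int (Suc k)) div int n"

lemma n0: "n > 0" using odd_n by (auto intro: odd_pos)

lemma na_int: "int na = a mod int n" using n0 by (simp add: na_def)
lemma nb_int: "int nb = b mod int n" using n0 by (simp add: nb_def)

lemma cop_na: "coprime na n"
proof -
  have "coprime (a mod int n) (int n)" using cop_a n0 by simp
  hence "coprime (int na) (int n)" by (simp add: na_int)
  thus ?thesis by simp
qed

lemma cop_nb: "coprime nb n"
proof -
  have "coprime (b mod int n) (int n)" using cop_b n0 by (simp add: b_def)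
  hence "coprime (int nb) (int n)" by (simp add: nb_int)
  thus ?thesis by simp
qed

lemma perm_\<sigma>: "\<sigma> permutes {..<n}"
  unfolding \<sigma>_def by (rule permutes_compose[OF trp_permutes mulp_permutes[OF cop_na]])
lemma perm_\<tau>: "\<tau> permutes {..<n}"
  unfolding \<tau>_def by (rule permutes_compose[OF trp_permutes mulp_permutes[OF cop_nb]])

lemma \<sigma>_int: "j < n \<Longrightarrow> int (\<sigma> j) = (a * int (Suc j)) mod int n"
proof -
  assume j: "j < n"
  have "\<sigma> j = (na * (Suc j mod n)) mod n" using j n0 by (simp add: \<sigma>_def trp_def mulp_def)
  hence "int (\<sigma> j) = (int na * (int (Suc j) mod int n)) mod int n" by (simp add: of_nat_mod)
  also have "\<dots> = (a * int (Suc j)) mod int n" by (simp add: na_int mod_mult_eq)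
  finally show ?thesis .
qed

lemma \<tau>_int: "k < n \<Longrightarrow> int (\<tau> k) = (b * int (Suc k)) mod int n"
proof -
  assume k: "k < n"
  have "\<tau> k = (nb * (Suc k mod n)) mod n" using k n0 by (simp add: \<tau>_def trp_def mulp_def)
  hence "int (\<tau> k) = (int nb * (int (Suc k) mod int n)) mod int n" by (simp add: of_nat_mod)
  also have "\<dots> = (b * int (Suc k)) mod int n" by (simp add: nb_int mod_mult_eq)
  finally show ?thesis .
qed

lemma \<sigma>_lt: "j < n \<Longrightarrow> \<sigma> j < n" using permutes_in_image[OF perm_\<sigma>] by auto
lemma \<tau>_lt: "k < n \<Longrightarrow> \<tau> k < n" using permutes_in_image[OF perm_\<tau>] by auto

lemma a_dec: "a * int (Suc j) = int n * \<alpha> j + int (\<sigma> j)" if "j < n"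
  using \<sigma>_int[OF that] by (simp add: \<alpha>_def)
lemma b_dec: "b * int (Suc k) = int n * \<beta> k + int (\<tau> k)" if "k < n"
  using \<tau>_int[OF that] by (simp add: \<beta>_def)

lemma X_dec:
  assumes j: "j < n" and k: "k < n"
  shows "X j k div int n = \<alpha> j - \<beta> k - (if \<sigma> j < \<tau> k then 1 else 0)"
proof -
  define d where "d = int (\<sigma> j) - int (\<tau> k)"
  have X: "X j k = d + int n * (\<alpha> j - \<beta> k)"
    using a_dec[OF j] b_dec[OF k] by (simp add: X_def d_def algebra_simps)
  have dd: "d div int n = (if \<sigma> j < \<tau> k then -1 else 0)"
  proof (cases "\<sigma> j < \<tau> k")
    case True
    have "(d + int n) div int n = 0" using True \<sigma>_lt[OF j] \<tau>_lt[OF k] by (auto simp: d_def)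
    moreover have "(d + int n) div int n = d div int n + 1" using n0 by (simp add: div_add_self2)
    ultimately show ?thesis using True by simp
  next
    case False
    thus ?thesis using \<sigma>_lt[OF j] \<tau>_lt[OF k] by (auto simp: d_def)
  qed
  have "X j k div int n = (\<alpha> j - \<beta> k) + d div int n" unfolding X using n0 by simp
  thus ?thesis using dd by simp
qed

lemma \<sigma>_last: "\<sigma> (n - 1) = 0"
proof -
  have "int (\<sigma> (n - 1)) = (a * int n) mod int n" using \<sigma>_int[of "n - 1"] n0 by simp
  thus ?thesis by simp
qed

lemma \<tau>_last: "\<tau> (n - 1) = 0"
proof -
  have "int (\<tau> (n - 1)) = (b * int n) mod int n" using \<tau>_int[of "n - 1"] n0 by simp
  thus ?thesis by simp
qed

lemma \<sigma>_step: "Suc j < n \<Longrightarrow> int (\<sigma> (Suc j)) = (int (\<sigma> j) + a) mod int n"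
proof -
  assume h: "Suc j < n"
  have "int (\<sigma> (Suc j)) = (a * int (Suc j) + a) mod int n" using \<sigma>_int[OF h] by (simp add: algebra_simps)
  also have "\<dots> = ((a * int (Suc j)) mod int n + a) mod int n" by (simp add: mod_add_left_eq)
  also have "(a * int (Suc j)) mod int n = int (\<sigma> j)" using \<sigma>_int[of j] h by simp
  finally show ?thesis .
qed

lemma \<tau>_step: "Suc k < n \<Longrightarrow> int (\<tau> (Suc k)) = (int (\<tau> k) + b) mod int n"
proof -
  assume h: "Suc k < n"
  have "int (\<tau> (Suc k)) = (b * int (Suc k) + b) mod int n" using \<tau>_int[OF h] by (simp add: algebra_simps)
  also have "\<dots> = ((b * int (Suc k)) mod int n + b) mod int n" by (simp add: mod_add_left_eq)
  also have "(b * int (Suc k)) mod int n = int (\<tau> k)" using \<tau>_int[of k] h by simp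
  finally show ?thesis .
qed

lemma sign_\<sigma>\<tau>: "sign \<sigma> * sign \<tau> = Jacobi (a * b) n"
proof -
  have pm: "permutation (mulp n na)" "permutation (mulp n nb)"
    using mulp_permutes[OF cop_na] mulp_permutes[OF cop_nb] permutes_imp_permutation by blast+
  have "sign \<sigma> = sign (mulp n na)"
    unfolding \<sigma>_def by (simp add: sign_compose[OF pm(1) permutation_trp] sign_trp_odd[OF odd_n])
  moreover have "sign \<tau> = sign (mulp n nb)"
    unfolding \<tau>_def by (simp add: sign_compose[OF pm(2) permutation_trp] sign_trp_odd[OF odd_n])
  moreover have "sign (mulp n na) * sign (mulp n nb) = sign (mulp n (na * nb))"
    by (simp add: mulp_mult sign_compose[OF pm])
  moreover have "sign (mulp n (na * nb)) = Jacobi (int (na * nb)) n"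
    using cop_na cop_nb by (intro zolotarev odd_n) auto
  moreover have "Jacobi (int (na * nb)) n = Jacobi (a * b) n"
  proof (rule Jacobi_cong)
    have "int (na * nb) = (a mod int n) * (b mod int n)" by (simp add: na_int nb_int)
    thus "[int (na * nb) = a * b] (mod int n)" by (simp add: cong_def mod_mult_eq)
  qed
  ultimately show ?thesis by simp
qed

lemma sum_\<alpha>\<beta>: "(\<Sum>j<n. \<alpha> j) - (\<Sum>k<n. \<beta> k) = - ((int n + 1) div 2)"
proof -
  have s\<sigma>: "(\<Sum>j<n. int (\<sigma> j)) = (\<Sum>j<n. int j)"
    using sum.permute[OF perm_\<sigma>, of int] by (simp add: comp_def)
  have s\<tau>: "(\<Sum>j<n. int (\<tau> j)) = (\<Sum>j<n. int j)"
    using sum.permute[OF perm_\<tau>, of int] by (simp add: comp_def)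
  have "(\<Sum>j<n. a * int (Suc j)) = (\<Sum>j<n. int n * \<alpha> j + int (\<sigma> j))"
    by (intro sum.cong refl a_dec) simp
  hence A: "(\<Sum>j<n. a * int (Suc j)) = int n * (\<Sum>j<n. \<alpha> j) + (\<Sum>j<n. int (\<sigma> j))"
    by (simp add: sum.distrib sum_distrib_left)
  have "(\<Sum>j<n. b * int (Suc j)) = (\<Sum>j<n. int n * \<beta> j + int (\<tau> j))"
    by (intro sum.cong refl b_dec) simp
  hence B: "(\<Sum>j<n. b * int (Suc j)) = int n * (\<Sum>j<n. \<beta> j) + (\<Sum>j<n. int (\<tau> j))"
    by (simp add: sum.distrib sum_distrib_left)
  from A B have "int n * ((\<Sum>j<n. \<alpha> j) - (\<Sum>j<n. \<beta> j)) = (\<Sum>j<n. a * int (Suc j)) - (\<Sum>j<n. b * int (Suc j))"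
    using s\<sigma> s\<tau> by (simp add: algebra_simps)
  also have "\<dots> = - (\<Sum>j<n. int (Suc j))"
    by (simp add: b_def sum_distrib_left[symmetric] algebra_simps sum.distrib)
  finally have "2 * (int n * ((\<Sum>j<n. \<alpha> j) - (\<Sum>j<n. \<beta> j))) = - (int n * (int n + 1))"
    using sum_Suc_int[of n] by simp
  hence "int n * (2 * ((\<Sum>j<n. \<alpha> j) - (\<Sum>j<n. \<beta> j))) = int n * (- (int n + 1))" by (simp add: algebra_simps)
  hence "2 * ((\<Sum>j<n. \<alpha> j) - (\<Sum>j<n. \<beta> j)) = - (int n + 1)" using n0 by simp
  moreover have "int n + 1 = 2 * ((int n + 1) div 2)" using odd_n by presburger
  ultimately show ?thesis by simp
qed

end

context cop
begin

lemma mod_pred_int: "((y::int) mod m + m - 1) mod m = (y - 1) mod m"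
proof -
  have "(y mod m + (m - 1)) mod m = (y + (m - 1)) mod m" by (rule mod_add_left_eq)
  also have "y + (m - 1) = (y - 1) + m" by simp
  also have "((y - 1) + m) mod m = (y - 1) mod m" by simp
  finally show ?thesis by (simp add: add_diff_eq)
qed

definition "pv v = (v + n - 1) mod n"
definition "pz k = Hilbert_Choice.inv \<sigma> (\<tau> k)"
definition "po k = Hilbert_Choice.inv \<sigma> (pv (\<tau> k))"

lemma inv\<sigma>_lt: "u < n \<Longrightarrow> Hilbert_Choice.inv \<sigma> u < n"
  using permutes_in_image[OF permutes_inv[OF perm_\<sigma>]] by auto
lemma inv\<tau>_lt: "u < n \<Longrightarrow> Hilbert_Choice.inv \<tau> u < n"
  using permutes_in_image[OF permutes_inv[OF perm_\<tau>]] by auto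
lemma \<sigma>_inv[simp]: "\<sigma> (Hilbert_Choice.inv \<sigma> u) = u" using permutes_inverses(1)[OF perm_\<sigma>] .
lemma inv_\<sigma>[simp]: "Hilbert_Choice.inv \<sigma> (\<sigma> j) = j" using permutes_inverses(2)[OF perm_\<sigma>] .
lemma \<tau>_inv[simp]: "\<tau> (Hilbert_Choice.inv \<tau> u) = u" using permutes_inverses(1)[OF perm_\<tau>] .
lemma inv_\<tau>[simp]: "Hilbert_Choice.inv \<tau> (\<tau> j) = j" using permutes_inverses(2)[OF perm_\<tau>] .

lemma \<sigma>_zero_iff: "j < n \<Longrightarrow> \<sigma> j = 0 \<longleftrightarrow> j = n - 1"
  by (metis \<sigma>_last inv_\<sigma>)
lemma \<tau>_zero_iff: "k < n \<Longrightarrow> \<tau> k = 0 \<longleftrightarrow> k = n - 1"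
  by (metis \<tau>_last inv_\<tau>)

lemma pv_lt: "pv v < n" using n0 by (simp add: pv_def)
lemma pv_int: "int (pv v) = (int v + int n - 1) mod int n"
  using n0 by (simp add: pv_def of_nat_mod of_nat_diff)
lemma pv_pos: "0 < v \<Longrightarrow> v < n \<Longrightarrow> pv v = v - 1"
proof -
  assume v: "0 < v" "v < n"
  have "v + n - 1 = (v - 1) + n" using v by simp
  hence "pv v = (v - 1) mod n" by (simp add: pv_def)
  thus "pv v = v - 1" using v by simp
qed

lemma pv_less: "v < n \<Longrightarrow> pv v < v \<longleftrightarrow> v \<noteq> 0"
proof -
  assume v: "v < n"
  show ?thesis
  proof (cases "v = 0")
    case True thus ?thesis by simp
  next
    case False
    have "v + n - 1 = (v - 1) + n" using False by simp
    hence "pv v = (v - 1) mod n" by (simp add: pv_def)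
    hence "pv v = v - 1" using v by simp
    thus ?thesis using False by simp
  qed
qed

lemma pz_lt: "k < n \<Longrightarrow> pz k < n" by (simp add: pz_def inv\<sigma>_lt \<tau>_lt)
lemma po_lt: "po k < n" by (simp add: po_def inv\<sigma>_lt pv_lt)
lemma \<sigma>pz: "\<sigma> (pz k) = \<tau> k" by (simp add: pz_def)
lemma \<sigma>po: "\<sigma> (po k) = pv (\<tau> k)" by (simp add: po_def)

lemma X_step: "X (Suc j) (Suc k) = X j k - 1" by (simp add: X_def b_def algebra_simps)

lemma X_pz: "k < n \<Longrightarrow> X (pz k) k = int n * (\<alpha> (pz k) - \<beta> k)"
  using a_dec[OF pz_lt] b_dec \<sigma>pz by (simp add: X_def algebra_simps)

lemma po_Suc:
  assumes k: "Suc k < n"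
  shows "po (Suc k) = Suc (pz k)"
proof -
  define j where "j = pz k"
  have kn: "k < n" using k by simp
  have "\<tau> k \<noteq> 0" using \<tau>_zero_iff[OF kn] k by simp
  hence "\<sigma> j \<noteq> 0" by (simp add: j_def \<sigma>pz)
  hence "j \<noteq> n - 1" using \<sigma>_last by auto
  moreover have "j < n" using pz_lt[OF kn] by (simp add: j_def)
  ultimately have j: "Suc j < n" by simp
  have "int (\<sigma> (Suc j)) = (int (\<tau> k) + a) mod int n"
    using \<sigma>_step[OF j] by (simp add: j_def \<sigma>pz)
  also have "\<dots> = ((int (\<tau> k) + b) mod int n + int n - 1) mod int n"
    by (simp only: mod_pred_int) (simp add: b_def)
  also have "\<dots> = int (pv (\<tau> (Suc k)))" using \<tau>_step[OF k] by (simp add: pv_int)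
  finally have "\<sigma> (Suc j) = pv (\<tau> (Suc k))" by simp
  hence "Hilbert_Choice.inv \<sigma> (pv (\<tau> (Suc k))) = Suc j" by (metis inv_\<sigma>)
  thus ?thesis by (simp add: po_def j_def)
qed

lemma po_0: "po 0 = 0"
proof -
  have "int (\<sigma> 0) = a mod int n" using \<sigma>_int[of 0] n0 by simp
  also have "\<dots> = (b mod int n + int n - 1) mod int n"
    by (simp only: mod_pred_int) (simp add: b_def)
  also have "\<dots> = int (pv (\<tau> 0))" using \<tau>_int[of 0] n0 by (simp add: pv_int)
  finally have "\<sigma> 0 = pv (\<tau> 0)" by simp
  hence "Hilbert_Choice.inv \<sigma> (pv (\<tau> 0)) = 0" by (metis inv_\<sigma>)
  thus ?thesis by (simp add: po_def)
qed

lemma pz_last: "pz (n - 1) = n - 1"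
  by (metis pz_def \<sigma>_last \<tau>_last inv_\<sigma>)

definition "Av u = \<alpha> (Hilbert_Choice.inv \<sigma> u)"
definition "Bv v = \<beta> (Hilbert_Choice.inv \<tau> v)"
definition "Pf (t::real) u = t powi (- Av u)"
definition "Qf (t::real) v = t powi (Bv v)"
definition "Yf (t::real) v = (Pf t (pv v) - Pf t v) / (inverse t - 1) + (if v = 0 then Pf t (n - 1) else 0)"
definition "U0 (t::real) k = t powi (- (X (pz k) k div int n))"
definition "U1 (t::real) k = t powi (- (X (po k) k div int n))"

lemma sum_pv: "(\<Sum>v<n. f (pv v)) = (\<Sum>v<n. f v)"
proof -
  have "(\<Sum>v<n. f v) = (\<Sum>v<n. (f \<circ> trp n (n - 1)) v)" by (rule sum.permute[OF trp_permutes])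
  also have "\<dots> = (\<Sum>v<n. f (pv v))"
    using n0 by (intro sum.cong) (auto simp: trp_def pv_def)
  finally show ?thesis by simp
qed

lemma KY:
  fixes t :: real
  assumes t: "t > 1" and u: "u < n"
  shows "(\<Sum>v<n. (if u < v then inverse t else 1) * Yf t v) = Pf t u"
proof -
  define s where "s = inverse t"
  have s1: "s - 1 \<noteq> 0" using t by (simp add: s_def)
  define P where "P = Pf t"
  obtain m where m: "n = Suc m" using n0 by (cases n) auto
  have sumY: "(\<Sum>v<n. Yf t v) = P (n - 1)"
  proof -
    have "(\<Sum>v<n. Yf t v) = (\<Sum>v<n. (P (pv v) - P v) / (s - 1)) + (\<Sum>v<n. if v = 0 then P (n - 1) else 0)"
      by (simp add: Yf_def sum.distrib s_def P_def)
    also have "(\<Sum>v<n. (P (pv v) - P v) / (s - 1)) = ((\<Sum>v<n. P (pv v)) - (\<Sum>v<n. P v)) / (s - 1)"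
      by (simp only: sum_divide_distrib[symmetric] sum_subtractf)
    also have "(\<Sum>v<n. P (pv v)) = (\<Sum>v<n. P v)" by (rule sum_pv)
    also have "(\<Sum>v<n. if v = 0 then P (n - 1) else 0) = P (n - 1)" using n0 by simp
    finally show ?thesis by simp
  qed
  have sumYu: "(\<Sum>v\<in>{u<..<n}. Yf t v) = (P u - P (n - 1)) / (s - 1)"
  proof -
    have "(\<Sum>v\<in>{u<..<n}. Yf t v) = (\<Sum>v\<in>{Suc u..<Suc m}. (P (v - 1) - P v) / (s - 1))"
    proof (rule sum.cong)
      show "{u<..<n} = {Suc u..<Suc m}" using m by auto
    next
      fix v assume v: "v \<in> {Suc u..<Suc m}"
      hence "v \<noteq> 0" "v < n" using m by auto
      hence "pv v = v - 1" using pv_pos[of v] by simp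
      thus "Yf t v = (P (v - 1) - P v) / (s - 1)" using \<open>v \<noteq> 0\<close> by (simp add: Yf_def P_def s_def)
    qed
    also have "\<dots> = (\<Sum>i\<in>{u..<m}. (P i - P (Suc i)) / (s - 1))"
      by (subst sum.shift_bounds_Suc_ivl) simp
    also have "\<dots> = - (\<Sum>i\<in>{u..<m}. P (Suc i) - P i) / (s - 1)"
      by (simp add: sum_divide_distrib[symmetric] sum_negf[symmetric])
    also have "(\<Sum>i\<in>{u..<m}. P (Suc i) - P i) = P m - P u"
      using u m by (intro sum_Suc_diff') simp
    finally show ?thesis using m by (simp add: field_simps)
  qed
  have "(\<Sum>v<n. (if u < v then inverse t else 1) * Yf t v) =
      (\<Sum>v<n. Yf t v) + (\<Sum>v<n. if u < v then (s - 1) * Yf t v else 0)"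
    by (subst sum.distrib[symmetric]) (intro sum.cong, auto simp: s_def algebra_simps)
  also have "(\<Sum>v<n. if u < v then (s - 1) * Yf t v else 0) = (\<Sum>v\<in>{u<..<n}. (s - 1) * Yf t v)"
  proof -
    have "{u<..<n} = {v \<in> {..<n}. u < v}" by auto
    moreover have "(\<Sum>v\<in>{v \<in> {..<n}. u < v}. (s - 1) * Yf t v) = (\<Sum>v<n. if u < v then (s - 1) * Yf t v else 0)"
      by (rule sum.inter_filter) simp
    ultimately show ?thesis by simp
  qed
  also have "\<dots> = (s - 1) * ((P u - P (n - 1)) / (s - 1))" by (simp add: sum_distrib_left[symmetric] sumYu)
  also have "\<dots> = P u - P (n - 1)" using s1 by simp
  finally show ?thesis using sumY by (simp add: P_def)
qed

end

context cop
begin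

lemma neg1_div: "(-1::int) div int n = -1" using n0 by (simp add: div_eq_minus1)

lemma QP0:
  fixes t :: real
  assumes t: "t > 1" and k: "k < n"
  shows "Qf t (\<tau> k) * Pf t (\<tau> k) = U0 t k"
proof -
  have "X (pz k) k div int n = \<alpha> (pz k) - \<beta> k" using X_pz[OF k] n0 by simp
  moreover have "Qf t (\<tau> k) * Pf t (\<tau> k) = t powi (\<beta> k) * t powi (- \<alpha> (pz k))"
    by (simp add: Qf_def Pf_def Av_def Bv_def pz_def)
  moreover have "t powi (\<beta> k) * t powi (- \<alpha> (pz k)) = t powi (\<beta> k + - \<alpha> (pz k))"
    using t by (intro power_int_add[symmetric]) auto
  ultimately show ?thesis by (simp add: U0_def)
qed

lemma QP1:
  fixes t :: real
  assumes t: "t > 1" and k: "k < n"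
  shows "Qf t (\<tau> k) * Pf t (pv (\<tau> k)) = U1 t k * (if k = n - 1 then 1 else inverse t)"
proof -
  have "X (po k) k div int n = \<alpha> (po k) - \<beta> k - (if \<sigma> (po k) < \<tau> k then 1 else 0)"
    by (rule X_dec[OF po_lt k])
  also have "(\<sigma> (po k) < \<tau> k) \<longleftrightarrow> k \<noteq> n - 1"
    using \<sigma>po pv_less[OF \<tau>_lt[OF k]] \<tau>_zero_iff[OF k] by simp
  finally have e: "X (po k) k div int n = \<alpha> (po k) - \<beta> k - (if k \<noteq> n - 1 then 1 else 0)" .
  have "Qf t (\<tau> k) * Pf t (pv (\<tau> k)) = t powi (\<beta> k) * t powi (- \<alpha> (po k))"
    by (simp add: Qf_def Pf_def Av_def Bv_def po_def)
  also have "\<dots> = t powi (\<beta> k + - \<alpha> (po k))"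
    using t by (intro power_int_add[symmetric]) auto
  also have "\<beta> k + - \<alpha> (po k) = - (X (po k) k div int n) + - (if k \<noteq> n - 1 then 1 else 0)"
    by (simp add: e)
  also have "t powi \<dots> = U1 t k * t powi (- (if k \<noteq> n - 1 then 1 else 0))"
    unfolding U1_def using t by (intro power_int_add) auto
  also have "t powi (- (if k \<noteq> n - 1 then 1 else 0)) = (if k = n - 1 then 1 else inverse t)"
    by (simp add: power_int_minus)
  finally show ?thesis .
qed

lemma U1_0: "U1 t 0 = t"
  using po_0 neg1_div by (simp add: U1_def X_def b_def)

lemma U0_last: "U0 t (n - 1) = t"
proof -
  have "X (n - 1) (n - 1) = int n * (-1)" using n0 by (simp add: X_def b_def algebra_simps of_nat_diff)
  hence "X (n - 1) (n - 1) div int n = -1" using n0 by (simp only:) (rule nonzero_mult_div_cancel_left, simp)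
  thus ?thesis using pz_last by (simp add: U0_def)
qed

lemma U1_Suc:
  fixes t :: real
  assumes t: "t > 1" and k: "Suc k < n"
  shows "U1 t (Suc k) = t * U0 t k"
proof -
  have kn: "k < n" using k by simp
  define c where "c = \<alpha> (pz k) - \<beta> k"
  have "X (po (Suc k)) (Suc k) = X (pz k) k - 1" using po_Suc[OF k] X_step by simp
  also have "\<dots> = -1 + int n * c" using X_pz[OF kn] by (simp add: c_def)
  finally have eqX: "X (po (Suc k)) (Suc k) = -1 + int n * c" .
  have "(-1 + int n * c) div int n = c + (-1) div int n" using n0 by (intro div_mult_self2) simp
  hence "X (po (Suc k)) (Suc k) div int n = c + (-1) div int n" by (simp only: eqX)
  hence e1: "X (po (Suc k)) (Suc k) div int n = c - 1" using neg1_div by simp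
  have e0: "X (pz k) k div int n = c" using X_pz[OF kn] n0 by (simp add: c_def)
  have "U1 t (Suc k) = t powi (- c + 1)" by (simp add: U1_def e1)
  also have "\<dots> = t powi (- c) * t powi 1" using t by (intro power_int_add) auto
  finally show ?thesis by (simp add: U0_def e0)
qed

lemma QY:
  fixes t :: real
  assumes t: "t > 1"
  shows "(\<Sum>v<n. Qf t v * Yf t v) = t"
proof -
  define s where "s = inverse t"
  have s1: "s - 1 \<noteq> 0" using t by (simp add: s_def)
  define P where "P = Pf t"
  define Q where "Q = Qf t"
  obtain m where m: "n = Suc m" using n0 by (cases n) auto
  have reidx: "(\<Sum>v<n. f v) = (\<Sum>k<n. f (\<tau> k))" for f :: "nat \<Rightarrow> real"
    using sum.permute[OF perm_\<tau>, of f] by (simp add: comp_def)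
  have "(\<Sum>v<n. Qf t v * Yf t v) = (\<Sum>v<n. (Q v * P (pv v) - Q v * P v) / (s - 1)) + (\<Sum>v<n. if v = 0 then Q 0 * P (n - 1) else 0)"
    by (subst sum.distrib[symmetric]) (intro sum.cong, auto simp: Yf_def P_def Q_def s_def algebra_simps add_divide_distrib diff_divide_distrib)
  also have "(\<Sum>v<n. if v = 0 then Q 0 * P (n - 1) else 0) = Q 0 * P (n - 1)" using n0 by simp
  also have "Q 0 * P (n - 1) = U1 t m"
  proof -
    have "Q (\<tau> m) * P (pv (\<tau> m)) = U1 t m * (if m = n - 1 then 1 else inverse t)"
      unfolding P_def Q_def by (rule QP1[OF t]) (simp add: m)
    moreover have "\<tau> m = 0" using \<tau>_last m by simp
    moreover have "pv 0 = n - 1" using n0 by (simp add: pv_def)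
    ultimately show ?thesis using m by simp
  qed
  also have "(\<Sum>v<n. (Q v * P (pv v) - Q v * P v) / (s - 1)) =
      ((\<Sum>v<n. Q v * P (pv v)) - (\<Sum>v<n. Q v * P v)) / (s - 1)"
    by (simp only: sum_divide_distrib[symmetric] sum_subtractf)
  also have "(\<Sum>v<n. Q v * P (pv v)) = (\<Sum>k<n. U1 t k * (if k = n - 1 then 1 else s))"
    unfolding reidx[of "\<lambda>v. Q v * P (pv v)"] unfolding P_def Q_def s_def
    by (intro sum.cong refl QP1[OF t]) simp
  also have "\<dots> = s * (\<Sum>k<m. U1 t k) + U1 t m"
    using m by (simp add: sum_distrib_left mult.commute)
  also have "(\<Sum>v<n. Q v * P v) = (\<Sum>k<n. U0 t k)"
    unfolding reidx[of "\<lambda>v. Q v * P v"] unfolding P_def Q_def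
    by (intro sum.cong refl QP0[OF t]) simp
  also have "\<dots> = (\<Sum>k<m. U0 t k) + t" using m U0_last[of t] by simp
  also have "(\<Sum>k<m. U1 t k) = t + t * (\<Sum>k<m. U0 t k) - U1 t m"
  proof -
    have "(\<Sum>k<Suc m. U1 t k) = U1 t 0 + (\<Sum>k<m. U1 t (Suc k))" by (rule sum.lessThan_Suc_shift)
    also have "(\<Sum>k<m. U1 t (Suc k)) = (\<Sum>k<m. t * U0 t k)"
      using m by (intro sum.cong refl U1_Suc[OF t]) simp
    finally show ?thesis using U1_0[of t] by (simp add: sum_distrib_left)
  qed
  finally have "(\<Sum>v<n. Qf t v * Yf t v) =
    (s * (t + t * (\<Sum>k<m. U0 t k) - U1 t m) + U1 t m - ((\<Sum>k<m. U0 t k) + t)) / (s - 1) + U1 t m" .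
  also have "\<dots> = t" using t s1 by (simp add: s_def field_simps)
  finally show ?thesis .
qed

end

lemma prod_powi:
  fixes x :: real and m :: nat and f :: "nat \<Rightarrow> int"
  assumes "x \<noteq> 0"
  shows "(\<Prod>i<m. x powi f i) = x powi (\<Sum>i<m. f i)"
proof (induction m)
  case (Suc m)
  thus ?case using assms by (simp add: power_int_add)
qed simp

context cop
begin

lemma det_main:
  fixes t :: real
  assumes t: "t > 1"
  shows "det (mat n n (\<lambda>(j,k). t powi (X j k div int n) - 1)) =
    - of_int (Jacobi (a * b) n) * (t - 1) ^ n * t powi ((1 - 3 * int n) div 2)"
proof -
  have t0: "t \<noteq> 0" using t by simp
  define g where "g u v = t powi (Av u - Bv v - (if u < v then 1 else 0)) - 1" for u v
  define \<kappa> where "\<kappa> u v = (if u < v then inverse t else 1)" for u v :: nat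
  have E: "mat n n (\<lambda>(j,k). t powi (X j k div int n) - 1) = mat n n (\<lambda>(j,k). g (\<sigma> j) (\<tau> k))"
  proof (rule eq_matI)
    fix j k assume "j < dim_row (mat n n (\<lambda>(j,k). g (\<sigma> j) (\<tau> k)))" "k < dim_col (mat n n (\<lambda>(j,k). g (\<sigma> j) (\<tau> k)))"
    hence jk: "j < n" "k < n" by auto
    show "mat n n (\<lambda>(j,k). t powi (X j k div int n) - 1) $$ (j, k) = mat n n (\<lambda>(j,k). g (\<sigma> j) (\<tau> k)) $$ (j, k)"
      using jk X_dec[OF jk] by (simp add: g_def Av_def Bv_def)
  qed auto
  have ps: "\<sigma> permutes {0..<n}" and pt: "\<tau> permutes {0..<n}"
    using perm_\<sigma> perm_\<tau> by (simp_all add: atLeast0LessThan)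
  have d1: "det (mat n n (\<lambda>(j,k). t powi (X j k div int n) - 1)) = of_int (sign \<sigma> * sign \<tau>) * det (mat n n (\<lambda>(u,v). g u v))"
    unfolding E by (rule det_reindex[OF ps pt])
  have G: "mat n n (\<lambda>(u,v). g u v) = mat n n (\<lambda>(u,v). t powi Av u * (\<kappa> u v - Pf t u * Qf t v) * t powi (- Bv v))"
  proof (rule eq_matI)
    fix u v assume "u < dim_row (mat n n (\<lambda>(u,v). t powi Av u * (\<kappa> u v - Pf t u * Qf t v) * t powi (- Bv v)))"
      "v < dim_col (mat n n (\<lambda>(u,v). t powi Av u * (\<kappa> u v - Pf t u * Qf t v) * t powi (- Bv v)))"
    hence uv: "u < n" "v < n" by auto
    define A where "A = Av u"
    define B where "B = Bv v"
    define d :: int where "d = (if u < v then 1 else 0)"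
    have k: "\<kappa> u v = t powi (- d)" by (simp add: \<kappa>_def d_def power_int_minus)
    have 1: "t powi (A - B - d) = t powi A * t powi (- d) * t powi (- B)"
    proof -
      have "t powi (A + - d + - B) = t powi (A + - d) * t powi (- B)" using t0 by (intro power_int_add) auto
      also have "t powi (A + - d) = t powi A * t powi (- d)" using t0 by (intro power_int_add) auto
      finally show ?thesis by (simp add: algebra_simps)
    qed
    have 2: "t powi A * t powi (- A) = 1"
    proof -
      have "t powi (A + - A) = t powi A * t powi (- A)" using t0 by (intro power_int_add) auto
      thus ?thesis by simp
    qed
    have 3: "t powi B * t powi (- B) = 1"
    proof -
      have "t powi (B + - B) = t powi B * t powi (- B)" using t0 by (intro power_int_add) auto
      thus ?thesis by simp
    qed
    have "g u v = t powi (A - B - d) - 1" by (simp add: g_def A_def B_def d_def)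
    also have "\<dots> = t powi A * t powi (- d) * t powi (- B) - (t powi A * t powi (- A)) * (t powi B * t powi (- B))"
      by (simp only: 1 2 3)
    also have "\<dots> = t powi A * (\<kappa> u v - t powi (- A) * t powi B) * t powi (- B)"
      by (simp add: k algebra_simps)
    finally show "mat n n (\<lambda>(u,v). g u v) $$ (u, v) = mat n n (\<lambda>(u,v). t powi Av u * (\<kappa> u v - Pf t u * Qf t v) * t powi (- Bv v)) $$ (u, v)"
      using uv by (simp add: A_def B_def Pf_def Qf_def)
  qed auto
  have d2: "det (mat n n (\<lambda>(u,v). g u v)) = (\<Prod>u<n. t powi Av u) * (\<Prod>v<n. t powi (- Bv v)) * det (mat n n (\<lambda>(u,v). \<kappa> u v - Pf t u * Qf t v))"
    unfolding G by (rule det_scale)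
  have d3: "det (mat n n (\<lambda>(u,v). \<kappa> u v - Pf t u * Qf t v)) = det (mat n n (\<lambda>(u,v). \<kappa> u v)) * (1 - (\<Sum>v<n. Qf t v * Yf t v))"
    by (rule det_rank_one) (use KY[OF t] in \<open>simp add: \<kappa>_def\<close>)
  have d4: "det (mat n n (\<lambda>(u,v). \<kappa> u v)) = (1 - inverse t) ^ (n - 1)"
    unfolding \<kappa>_def by (rule det_K[OF n0])
  have sA: "(\<Sum>u<n. Av u) = (\<Sum>j<n. \<alpha> j)"
    using sum.permute[OF permutes_inv[OF perm_\<sigma>], of \<alpha>] by (simp add: Av_def comp_def)
  have sB: "(\<Sum>v<n. Bv v) = (\<Sum>k<n. \<beta> k)"
    using sum.permute[OF permutes_inv[OF perm_\<tau>], of \<beta>] by (simp add: Bv_def comp_def)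
  have p1: "(\<Prod>u<n. t powi Av u) * (\<Prod>v<n. t powi (- Bv v)) = t powi (- ((int n + 1) div 2))"
  proof -
    have "(\<Prod>u<n. t powi Av u) * (\<Prod>v<n. t powi (- Bv v)) = t powi (\<Sum>u<n. Av u) * t powi (\<Sum>v<n. - Bv v)"
      using t0 by (simp add: prod_powi)
    also have "\<dots> = t powi ((\<Sum>u<n. Av u) + (\<Sum>v<n. - Bv v))" using t0 by (intro power_int_add[symmetric]) auto
    also have "(\<Sum>u<n. Av u) + (\<Sum>v<n. - Bv v) = (\<Sum>j<n. \<alpha> j) - (\<Sum>k<n. \<beta> k)"
      by (simp add: sA sB sum_negf)
    also have "\<dots> = - ((int n + 1) div 2)" by (rule sum_\<alpha>\<beta>)
    finally show ?thesis .
  qed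
  have e1: "(1 - inverse t) ^ (n - 1) = (t - 1) ^ (n - 1) * t powi (- int (n - 1))"
  proof -
    have "1 - inverse t = (t - 1) * inverse t" using t0 by (simp add: field_simps)
    hence "(1 - inverse t) ^ (n - 1) = (t - 1) ^ (n - 1) * inverse t ^ (n - 1)" by (simp add: power_mult_distrib)
    also have "inverse t ^ (n - 1) = t powi (- int (n - 1))" by (simp add: power_int_minus power_inverse)
    finally show ?thesis .
  qed
  have e2: "t powi (- ((int n + 1) div 2)) * t powi (- int (n - 1)) = t powi ((1 - 3 * int n) div 2)"
  proof -
    have "- ((int n + 1) div 2) + - int (n - 1) = (1 - 3 * int n) div 2"
      using odd_n n0 by (auto elim!: oddE simp: of_nat_diff)
    moreover have "t powi (- ((int n + 1) div 2) + - int (n - 1)) = t powi (- ((int n + 1) div 2)) * t powi (- int (n - 1))"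
      using t0 by (intro power_int_add) auto
    ultimately show ?thesis by simp
  qed
  have e3: "(t - 1) ^ (n - 1) * (1 - t) = - ((t - 1) ^ n)"
  proof -
    have "n = Suc (n - 1)" using n0 by simp
    hence "(t - 1) ^ n = (t - 1) * (t - 1) ^ (n - 1)" by (metis power_Suc)
    thus ?thesis by (simp add: algebra_simps)
  qed
  have "det (mat n n (\<lambda>(j,k). t powi (X j k div int n) - 1)) =
      of_int (Jacobi (a * b) n) * (t powi (- ((int n + 1) div 2)) * t powi (- int (n - 1))) * ((t - 1) ^ (n - 1) * (1 - t))"
    unfolding d1 d2 d3 d4 p1 QY[OF t] e1 sign_\<sigma>\<tau> by (simp add: algebra_simps)
  also have "\<dots> = - of_int (Jacobi (a * b) n) * (t - 1) ^ n * t powi ((1 - 3 * int n) div 2)"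
    unfolding e2 e3 by simp
  finally show ?thesis .
qed

end

lemma det_zero_cols:
  fixes A :: "'a :: idom mat"
  assumes A: "A \<in> carrier_mat n n" and k: "k0 < n" "k1 < n" "k2 < n" "k0 \<noteq> k1" "k0 \<noteq> k2" "k1 \<noteq> k2"
    and comb: "\<And>i. i < n \<Longrightarrow> c0 * A $$ (i, k0) + c1 * A $$ (i, k1) + A $$ (i, k2) = 0"
  shows "det A = 0"
proof -
  define v where "v = vec n (\<lambda>k. c0 * (if k = k0 then 1 else 0) + c1 * (if k = k1 then 1 else 0) + (if k = k2 then 1 else 0))"
  have v: "v \<in> carrier_vec n" by (simp add: v_def)
  have "v $ k2 = 1" using k by (simp add: v_def)
  hence v0: "v \<noteq> 0\<^sub>v n" using k by auto
  have "A *\<^sub>v v = 0\<^sub>v n"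
  proof (rule eq_vecI)
    fix i assume "i < dim_vec (0\<^sub>v n :: 'a vec)"
    hence i: "i < n" by simp
    have "(A *\<^sub>v v) $ i = (\<Sum>k<n. A $$ (i, k) * v $ k)"
      using A v i by (simp add: mult_mat_vec_def scalar_prod_def atLeast0LessThan)
    also have "\<dots> = (\<Sum>k<n. c0 * (if k = k0 then A $$ (i, k) else 0) + c1 * (if k = k1 then A $$ (i, k) else 0) + (if k = k2 then A $$ (i, k) else 0))"
      by (intro sum.cong) (auto simp: v_def algebra_simps)
    also have "\<dots> = c0 * A $$ (i, k0) + c1 * A $$ (i, k1) + A $$ (i, k2)"
      using k by (simp add: sum.distrib sum_distrib_left[symmetric])
    also have "\<dots> = 0" using comb[OF i] .
    finally show "(A *\<^sub>v v) $ i = 0\<^sub>v n $ i" using i by simp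
  qed (use A in simp)
  thus ?thesis using det_0_iff_vec_prod_zero[OF A] v v0 by blast
qed

definition Xg :: "int \<Rightarrow> nat \<Rightarrow> nat \<Rightarrow> int" where
  "Xg a j k = a * int (Suc j) - (a + 1) * int (Suc k)"

lemma three_combo:
  fixes t :: real and h l :: real
  shows "l * (h - 1) - (l + 1) * (l * h - 1) + (l * l * h - 1) = 0"
  by (simp add: algebra_simps)

lemma powi_shift:
  fixes t :: real
  assumes "t \<noteq> 0" "n > 0"
  shows "t powi ((x + c * int n) div int n) = t powi (x div int n) * t powi c"
proof -
  have "(x + c * int n) div int n = c + x div int n" using assms by simp
  thus ?thesis using assms by (simp add: power_int_add add.commute)
qed

lemma noncop_det:
  fixes t :: real
  assumes n: "odd n" and t: "t > 1" and p: "prime p" "p dvd n" and pd: "int p dvd a \<or> int p dvd a + 1"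
  shows "det (mat n n (\<lambda>(j,k). t powi (Xg a j k div int n) - 1)) = 0"
proof -
  obtain h where nh: "n = p * h" using p by (auto elim: dvdE)
  have n0: "n > 0" using n by (auto intro: odd_pos)
  have h0: "h > 0" using n0 nh by auto
  have "odd p" using n nh by auto
  moreover have "p \<ge> 2" using p prime_ge_2_nat by blast
  ultimately have p3: "p \<ge> 3" by presburger
  have "3 * h \<le> p * h" using p3 by simp
  hence h2: "2 * h < n" using h0 nh by linarith
  have t0: "t \<noteq> 0" using t by simp
  define A where "A = mat n n (\<lambda>(j,k). t powi (Xg a j k div int n) - 1)"
  have A: "A \<in> carrier_mat n n" by (simp add: A_def)
  show ?thesis
  proof (cases "int p dvd a")
    case True
    then obtain c where c: "a = int p * c" by (auto elim: dvdE)
    define l where "l = t powi c"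
    have shift: "Xg a (m * h) k = Xg a 0 k + (int m * c) * int n" for m k
      by (simp add: Xg_def c nh algebra_simps)
    have ent: "A $$ (m * h, k) = t powi (Xg a 0 k div int n) * l ^ m - 1" if "m * h < n" "k < n" for m k
    proof -
      have "A $$ (m * h, k) = t powi ((Xg a 0 k + (int m * c) * int n) div int n) - 1"
        using that by (simp add: A_def shift)
      also have "\<dots> = t powi (Xg a 0 k div int n) * t powi (int m * c) - 1" by (simp only: powi_shift[OF t0 n0])
      also have "t powi (int m * c) = l ^ m" unfolding l_def power_int_power' by (simp add: mult.commute)
      finally show ?thesis .
    qed
    have AT: "transpose_mat A \<in> carrier_mat n n" using A by simp
    have "det (transpose_mat A) = 0"
    proof (rule det_zero_cols[OF AT, of 0 h "2 * h" l "- (l + 1)"])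
      fix i assume i: "i < n"
      have e0: "A $$ (0, i) = t powi (Xg a 0 i div int n) * l ^ 0 - 1" using ent[of 0 i] i n0 by simp
      have e1: "A $$ (h, i) = t powi (Xg a 0 i div int n) * l ^ 1 - 1" using ent[of 1 i] i h2 by simp
      have e2: "A $$ (2 * h, i) = t powi (Xg a 0 i div int n) * l ^ 2 - 1" using ent[of 2 i] i h2 by simp
      have T: "transpose_mat A $$ (i, 0) = A $$ (0, i)" "transpose_mat A $$ (i, h) = A $$ (h, i)"
        "transpose_mat A $$ (i, 2 * h) = A $$ (2 * h, i)" using A i h2 n0 by auto
      show "l * transpose_mat A $$ (i, 0) + - (l + 1) * transpose_mat A $$ (i, h) + transpose_mat A $$ (i, 2 * h) = 0"
        unfolding T e0 e1 e2 by (simp add: algebra_simps power2_eq_square)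
    qed (use h0 h2 n0 in auto)
    thus ?thesis using det_transpose[OF A] by (simp add: A_def)
  next
    case False
    hence "int p dvd a + 1" using pd by simp
    then obtain c where c: "a + 1 = int p * c" by (auto elim: dvdE)
    define l where "l = t powi (- c)"
    have c': "a = int p * c - 1" using c by simp
    have shift: "Xg a j (m * h) = Xg a j 0 + (int m * (- c)) * int n" for m j
      by (simp add: Xg_def c' nh algebra_simps)
    have ent: "A $$ (j, m * h) = t powi (Xg a j 0 div int n) * l ^ m - 1" if "m * h < n" "j < n" for m j
    proof -
      have "A $$ (j, m * h) = t powi ((Xg a j 0 + (int m * (- c)) * int n) div int n) - 1"
        using that by (simp add: A_def shift)
      also have "\<dots> = t powi (Xg a j 0 div int n) * t powi (int m * (- c)) - 1" by (simp only: powi_shift[OF t0 n0])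
      also have "t powi (int m * (- c)) = l ^ m" unfolding l_def power_int_power' by (simp add: mult.commute)
      finally show ?thesis .
    qed
    show ?thesis unfolding A_def[symmetric]
    proof (rule det_zero_cols[OF A, of 0 h "2 * h" l "- (l + 1)"])
      fix i assume i: "i < n"
      have e0: "A $$ (i, 0) = t powi (Xg a i 0 div int n) * l ^ 0 - 1" using ent[of 0 i] i n0 by simp
      have e1: "A $$ (i, h) = t powi (Xg a i 0 div int n) * l ^ 1 - 1" using ent[of 1 i] i h2 by simp
      have e2: "A $$ (i, 2 * h) = t powi (Xg a i 0 div int n) * l ^ 2 - 1" using ent[of 2 i] i h2 by simp
      show "l * A $$ (i, 0) + - (l + 1) * A $$ (i, h) + A $$ (i, 2 * h) = 0"
        unfolding e0 e1 e2 by (simp add: algebra_simps power2_eq_square)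
    qed (use h0 h2 n0 in auto)
  qed
qed

lemma noncop_Jacobi:
  assumes p: "prime p" "p dvd n" "n > 0" and pd: "int p dvd x"
  shows "Jacobi x n = 0"
proof -
  have pf: "p \<in> prime_factors n" using p by (auto simp: in_prime_factors_iff)
  have "Legendre x (int p) = 0" using pd by (simp add: Legendre_def cong_0_iff)
  moreover have "multiplicity p n > 0" using p by (auto simp: prime_multiplicity_gt_zero_iff)
  ultimately have "Legendre x (int p) ^ multiplicity p n = 0" by simp
  thus ?thesis unfolding Jacobi_def using pf by (intro prod_zero) auto
qed

lemma not_coprime_prime:
  assumes "\<not> coprime x (int n)" "n > 0"
  shows "\<exists>p. prime p \<and> p dvd n \<and> int p dvd x"
proof -
  define g where "g = gcd x (int n)"
  have g0: "g \<ge> 0" by (simp add: g_def)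
  have "g \<noteq> 0" using assms(2) by (simp add: g_def)
  moreover have "g \<noteq> 1" using assms(1) by (simp add: g_def coprime_iff_gcd_eq_1)
  ultimately have "nat g \<noteq> 1" using g0 by auto
  then obtain p where p: "prime p" "p dvd nat g" using prime_factor_nat by blast
  have "int p dvd g" using p(2) g0 by (metis int_dvd_int_iff int_nat_eq)
  hence "int p dvd x" "int p dvd int n" by (auto simp: g_def intro: dvd_trans)
  thus ?thesis using p by (auto simp: int_dvd_int_iff)
qed

theorem T_all:
  fixes t :: real
  assumes n: "odd n" and t: "t > 1"
  shows "det (mat n n (\<lambda>(j,k). t powi (Xg a j k div int n) - 1)) =
    - of_int (Jacobi (a * (a + 1)) n) * (t - 1) ^ n * t powi ((1 - 3 * int n) div 2)"
proof (cases "coprime a (int n) \<and> coprime (a + 1) (int n)")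
  case True
  interpret cop a n using n True by unfold_locales auto
  have "Xg a = X" by (auto simp: fun_eq_iff Xg_def X_def b_def)
  thus ?thesis using det_main[OF t] by (simp add: b_def)
next
  case False
  have n0: "n > 0" using n by (auto intro: odd_pos)
  obtain p where p: "prime p" "p dvd n" "int p dvd a \<or> int p dvd a + 1"
    using False not_coprime_prime[OF _ n0, of a] not_coprime_prime[OF _ n0, of "a + 1"] by blast
  have "det (mat n n (\<lambda>(j,k). t powi (Xg a j k div int n) - 1)) = 0"
    by (rule noncop_det[OF n t p])
  moreover have "Jacobi (a * (a + 1)) n = 0"
    using p n0 by (intro noncop_Jacobi[OF p(1,2) n0]) auto
  ultimately show ?thesis by simp
qed

lemma det_tendsto:
  fixes f :: "real \<Rightarrow> nat \<Rightarrow> nat \<Rightarrow> real"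
  assumes "\<And>i j. i < n \<Longrightarrow> j < n \<Longrightarrow> ((\<lambda>t. f t i j) \<longlongrightarrow> L i j) F"
  shows "((\<lambda>t. det (mat n n (\<lambda>(i,j). f t i j))) \<longlongrightarrow> det (mat n n (\<lambda>(i,j). L i j))) F"
proof -
  have eq: "det (mat n n (\<lambda>(i,j). g i j)) = (\<Sum>p\<in>{p. p permutes {0..<n}}. of_int (sign p) * (\<Prod>i = 0..<n. g i (p i)))"
    for g :: "nat \<Rightarrow> nat \<Rightarrow> real"
    unfolding det_def'[OF mat_carrier] by (intro sum.cong refl) (simp add: prod_mat_perm)
  show ?thesis unfolding eq
  proof (intro tendsto_sum tendsto_mult tendsto_const tendsto_prod)
    fix p i assume "p \<in> {p. p permutes {0..<n}}" "i \<in> {0..<n}"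
    moreover hence "p i \<in> {0..<n}" using permutes_in_image by fastforce
    ultimately show "((\<lambda>t. f t i (p i)) \<longlongrightarrow> L i (p i)) F" using assms by auto
  qed
qed

lemma powi_quot_tendsto:
  "((\<lambda>t::real. (t powi k - 1) / (t - 1)) \<longlongrightarrow> real_of_int k) (at_right 1)"
proof -
  have "((\<lambda>x::real. x powi k) has_field_derivative (of_int k * 1 powi (k - 1) * 1)) (at 1)"
    by (rule DERIV_power_int) (auto intro: DERIV_ident)
  hence "((\<lambda>y::real. (y powi k - 1 powi k) / (y - 1)) \<longlongrightarrow> of_int k * 1 powi (k - 1) * 1) (at 1)"
    by (simp add: has_field_derivative_iff)
  hence "((\<lambda>y::real. (y powi k - 1) / (y - 1)) \<longlongrightarrow> real_of_int k) (at 1)" by simp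
  thus ?thesis by (rule tendsto_mono[OF at_le, rotated]) simp
qed

theorem F_all:
  assumes n: "odd n"
  shows "det (mat n n (\<lambda>(j,k). Xg a j k div int n)) = - Jacobi (a * (a + 1)) n"
proof -
  define m where "m j k = Xg a j k div int n" for j k
  define J where "J = Jacobi (a * (a + 1)) n"
  define e where "e = (1 - 3 * int n) div 2"
  have lim1: "((\<lambda>t. det (mat n n (\<lambda>(j,k). (t powi m j k - 1) / (t - 1)))) \<longlongrightarrow> det (mat n n (\<lambda>(j,k). real_of_int (m j k)))) (at_right 1)"
    by (rule det_tendsto) (rule powi_quot_tendsto)
  have ev: "eventually (\<lambda>t. det (mat n n (\<lambda>(j,k). (t powi m j k - 1) / (t - 1))) = - of_int J * t powi e) (at_right (1::real))"
  proof -
    have "det (mat n n (\<lambda>(j,k). (t powi m j k - 1) / (t - 1))) = - of_int J * t powi e" if t: "t > 1" for t :: real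
    proof -
      have "mat n n (\<lambda>(j,k). (t powi m j k - 1) / (t - 1)) = inverse (t - 1) \<cdot>\<^sub>m mat n n (\<lambda>(j,k). t powi m j k - 1)"
        by (rule eq_matI) (auto simp: divide_inverse mult.commute)
      hence "det (mat n n (\<lambda>(j,k). (t powi m j k - 1) / (t - 1))) = inverse (t - 1) ^ n * det (mat n n (\<lambda>(j,k). t powi m j k - 1))"
        by simp
      also have "det (mat n n (\<lambda>(j,k). t powi m j k - 1)) = - of_int J * (t - 1) ^ n * t powi e"
        unfolding m_def J_def e_def by (rule T_all[OF n t])
      also have "inverse (t - 1) ^ n * (- of_int J * (t - 1) ^ n * t powi e) = - of_int J * t powi e"
        using t by (simp add: power_inverse field_simps)
      finally show ?thesis .
    qed
    thus ?thesis by (simp add: eventually_at_right_less eventually_mono[OF eventually_at_right_less] )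
  qed
  have lim2: "((\<lambda>t. - of_int J * t powi e) \<longlongrightarrow> - of_int J * (1::real) powi e) (at_right 1)"
    by (intro tendsto_intros) auto
  have lim3: "((\<lambda>t. det (mat n n (\<lambda>(j,k). (t powi m j k - 1) / (t - 1)))) \<longlongrightarrow> - of_int J) (at_right (1::real))"
    using tendsto_cong[OF ev] lim2 by simp
  have "det (mat n n (\<lambda>(j,k). real_of_int (m j k))) = - of_int J"
    using tendsto_unique[OF _ lim1 lim3] by simp
  moreover have "det (mat n n (\<lambda>(j,k). real_of_int (m j k))) = of_int (det (mat n n (\<lambda>(j,k). m j k)))"
  proof -
    have "mat n n (\<lambda>(j,k). real_of_int (m j k)) = map_mat of_int (mat n n (\<lambda>(j,k). m j k))"
      by (rule eq_matI) auto
    thus ?thesis by (simp add: of_int_hom.hom_det)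
  qed
  ultimately show ?thesis by (simp add: m_def J_def)
qed

theorem corollary1p1:
  fixes a :: int and n :: nat
  assumes "odd n"
  shows "det (mat n n (\<lambda>(j, k). \<lfloor>real_of_int (a * int (j + 1) - (a + 1) * int (k + 1)) / real n\<rfloor>))
           = - Jacobi (a * (a + 1)) n \<and>
         det (mat n n (\<lambda>(j, k). (2::real) powi \<lfloor>real_of_int (a * int (j + 1) - (a + 1) * int (k + 1)) / real n\<rfloor> - 1))
           = - real_of_int (Jacobi (a * (a + 1)) n) * (2::real) powi ((1 - 3 * int n) div 2)"
proof -
  have fl: "\<lfloor>real_of_int (a * int (j + 1) - (a + 1) * int (k + 1)) / real n\<rfloor> = Xg a j k div int n" for j k
  proof -
    have "real_of_int (a * int (j + 1) - (a + 1) * int (k + 1)) / real n = real_of_int (Xg a j k) / real_of_int (int n)"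
      by (simp add: Xg_def)
    thus ?thesis by (simp only: floor_divide_of_int_eq)
  qed
  have 1: "det (mat n n (\<lambda>(j, k). Xg a j k div int n)) = - Jacobi (a * (a + 1)) n"
    by (rule F_all[OF assms])
  have 2: "det (mat n n (\<lambda>(j, k). (2::real) powi (Xg a j k div int n) - 1))
      = - real_of_int (Jacobi (a * (a + 1)) n) * (2 - 1) ^ n * (2::real) powi ((1 - 3 * int n) div 2)"
    by (rule T_all[OF assms]) simp
  show ?thesis unfolding fl using 1 2 by simp
qed

end
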